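(* Let $R$ be a ring and let $A=\sigma(R)\langle x_1,\dots,x_n\rangle$ be a bijective skew PBW extension of $R$ with associated families $\Sigma,\Delta$. If $R$ is a right (resp. left) p.q.-Baer ring and $R$ is $(\Sigma,\Delta)$-compatible, then $A$ has Property $(a.c.)$ on the right (resp. left).
   Context: All rings are associative with identity. For $S\subseteq T$ (a ring $T$), $r_T(S)=\{a\in T: Sa=0\}$ and $\ell_T(S)=\{a\in T: aS=0\}$. A ring $A$ is a skew PBW extension of $R$, written $A=\sigma(R)\langle x_1,\dots,x_n\rangle$, if: (i) $R$ is a subring of $A$ with the same identity; (ii) there are elements $x_1,\dots,x_n\in A$ such that $A$ is a free left $R$-module with basis the standard monomials $x^\alpha=x_1^{\alpha_1}\cdots x_n^{\alpha_n}$, $\alpha\in\mathbb N^n$ (with $x^0=1$); (iii) for each $i$ and each nonzero $r\in R$ there is nonzero $c_{i,r}\in R$ with $x_ir-c_{i,r}x_i\in R$; (iv) for all $i,j$ there is nonzero $d_{i,j}\in R$ with $x_jx_i-d_{i,j}x_ix_j\in R+Rx_1+\cdots+Rx_n$. For such $A$ there are injective endomorphisms $\sigma_i$ of $R$ and $\sigma_i$-derivations $\delta_i$ of $R$ with $x_ir=\sigma_i(r)x_i+\delta_i(r)$ for all $r\in R$; $\Sigma=\{\sigma_1,\dots,\sigma_n\}$, $\Delta=\{\delta_1,\dots,\delta_n\}$. For $\alpha\in\mathbb N^n$, $\sigma^\alpha=\sigma_1^{\alpha_1}\circ\cdots\circ\sigma_n^{\alpha_n}$ and $\delta^\alpha=\delta_1^{\alpha_1}\circ\cdots\circ\delta_n^{\alpha_n}$.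 The extension is bijective if each $\sigma_i$ is bijective and each $d_{i,j}$ ($1\le i<j\le n$) is invertible. $R$ is $\Sigma$-compatible if for all $a,b\in R$ and $\alpha\in\mathbb N^n$: $a\sigma^\alpha(b)=0$ iff $ab=0$; $R$ is $\Delta$-compatible if for all $a,b\in R$ and $\beta\in\mathbb N^n$: $ab=0$ implies $a\delta^\beta(b)=0$; $(\Sigma,\Delta)$-compatible means both. $R$ is right p.q.-Baer if for every $a\in R$ there is an idempotent $e$ with $r_R(aR)=eR$; left p.q.-Baer if for every $a\in R$ there is an idempotent $e$ with $\ell_R(Ra)=Re$. A ring $T$ has Property $(a.c.)$ on the right if for every finitely generated right ideal $I$ of $T$ there is $c\in T$ with $r_T(I)=r_T(cT)$; on the left if for every finitely generated left ideal $I$ there is $c\in T$ with $\ell_T(I)=\ell_T(Tc)$. *)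

theory Defs
  imports Main
begin

text \<open>All rings are of class ring_1 (associative, with identity, not necessarily
commutative). The ring A is the whole type; R is a subset of it.\<close>

definition subring :: "'a::ring_1 set \<Rightarrow> bool" where
  "subring R \<longleftrightarrow> 0 \<in> R \<and> 1 \<in> R \<and>
     (\<forall>a\<in>R. \<forall>b\<in>R. a + b \<in> R \<and> a - b \<in> R \<and> a * b \<in> R)"

text \<open>Standard monomial x^alpha = x_1^alpha_1 ... x_n^alpha_n (indices shifted to 0..n-1).\<close>
definition std_monomial :: "(nat \<Rightarrow> 'a::ring_1) \<Rightarrow> nat \<Rightarrow> (nat \<Rightarrow> nat) \<Rightarrow> 'a" where
  "std_monomial x n \<alpha> = foldr (\<lambda>i acc. x i ^ \<alpha> i * acc) [0..<n] 1"

definition expvec :: "nat \<Rightarrow> (nat \<Rightarrow> nat) \<Rightarrow> bool" where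
  "expvec n \<alpha> \<longleftrightarrow> (\<forall>i\<ge>n. \<alpha> i = 0)"

definition coeff_family :: "'a::ring_1 set \<Rightarrow> nat \<Rightarrow> ((nat \<Rightarrow> nat) \<Rightarrow> 'a) \<Rightarrow> bool" where
  "coeff_family R n c \<longleftrightarrow> finite {\<alpha>. c \<alpha> \<noteq> 0} \<and> (\<forall>\<alpha>. c \<alpha> \<in> R) \<and>
     (\<forall>\<alpha>. c \<alpha> \<noteq> 0 \<longrightarrow> expvec n \<alpha>)"

definition lin_comb :: "(nat \<Rightarrow> 'a::ring_1) \<Rightarrow> nat \<Rightarrow> ((nat \<Rightarrow> nat) \<Rightarrow> 'a) \<Rightarrow> 'a" where
  "lin_comb x n c = (\<Sum>\<alpha>\<in>{\<alpha>. c \<alpha> \<noteq> 0}. c \<alpha> * std_monomial x n \<alpha>)"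

definition free_std_basis :: "'a::ring_1 set \<Rightarrow> (nat \<Rightarrow> 'a) \<Rightarrow> nat \<Rightarrow> bool" where
  "free_std_basis R x n \<longleftrightarrow>
     (\<forall>a::'a. \<exists>c. coeff_family R n c \<and> a = lin_comb x n c) \<and>
     (\<forall>c. coeff_family R n c \<and> lin_comb x n c = 0 \<longrightarrow> (\<forall>\<alpha>. c \<alpha> = 0)) \<and>
     inj_on (std_monomial x n) {\<alpha>. expvec n \<alpha>}"

definition lin_span1 :: "'a::ring_1 set \<Rightarrow> (nat \<Rightarrow> 'a) \<Rightarrow> nat \<Rightarrow> 'a set" where
  "lin_span1 R x n = {r0 + (\<Sum>k<n. r k * x k) | r0 r. r0 \<in> R \<and> (\<forall>k<n. r k \<in> R)}"

definition skew_PBW :: "'a::ring_1 set \<Rightarrow> (nat \<Rightarrow> 'a) \<Rightarrow> nat \<Rightarrow> bool" where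
  "skew_PBW R x n \<longleftrightarrow>
     subring R \<and>
     free_std_basis R x n \<and>
     (\<forall>i<n. \<forall>r\<in>R. r \<noteq> 0 \<longrightarrow> (\<exists>c\<in>R. c \<noteq> 0 \<and> x i * r - c * x i \<in> R)) \<and>
     (\<forall>i<n. \<forall>j<n. \<exists>d\<in>R. d \<noteq> 0 \<and> x j * x i - d * (x i * x j) \<in> lin_span1 R x n)"

definition unit_in :: "'a::ring_1 set \<Rightarrow> 'a \<Rightarrow> bool" where
  "unit_in R d \<longleftrightarrow> d \<in> R \<and> (\<exists>e\<in>R. d * e = 1 \<and> e * d = 1)"

definition assoc_families ::
  "'a::ring_1 set \<Rightarrow> (nat \<Rightarrow> 'a) \<Rightarrow> nat \<Rightarrow> (nat \<Rightarrow> 'a \<Rightarrow> 'a) \<Rightarrow> (nat \<Rightarrow> 'a \<Rightarrow> 'a) \<Rightarrow> bool" where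
  "assoc_families R x n \<sigma> \<delta> \<longleftrightarrow>
     (\<forall>i<n. \<forall>r\<in>R. \<sigma> i r \<in> R \<and> \<delta> i r \<in> R \<and> x i * r = \<sigma> i r * x i + \<delta> i r)"

definition bijective_skew_PBW ::
  "'a::ring_1 set \<Rightarrow> (nat \<Rightarrow> 'a) \<Rightarrow> nat \<Rightarrow> (nat \<Rightarrow> 'a \<Rightarrow> 'a) \<Rightarrow> bool" where
  "bijective_skew_PBW R x n \<sigma> \<longleftrightarrow>
     skew_PBW R x n \<and>
     (\<forall>i<n. bij_betw (\<sigma> i) R R) \<and>
     (\<forall>i j. i < j \<and> j < n \<longrightarrow>
        (\<exists>d. unit_in R d \<and> x j * x i - d * (x i * x j) \<in> lin_span1 R x n))"

definition fam_pow :: "nat \<Rightarrow> (nat \<Rightarrow> 'a \<Rightarrow> 'a) \<Rightarrow> (nat \<Rightarrow> nat) \<Rightarrow> 'a \<Rightarrow> 'a" where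
  "fam_pow n f \<alpha> = foldr (\<lambda>i g. (f i ^^ \<alpha> i) \<circ> g) [0..<n] id"

definition Sigma_compatible :: "'a::ring_1 set \<Rightarrow> nat \<Rightarrow> (nat \<Rightarrow> 'a \<Rightarrow> 'a) \<Rightarrow> bool" where
  "Sigma_compatible R n \<sigma> \<longleftrightarrow>
     (\<forall>a\<in>R. \<forall>b\<in>R. \<forall>\<alpha>. expvec n \<alpha> \<longrightarrow> (a * fam_pow n \<sigma> \<alpha> b = 0 \<longleftrightarrow> a * b = 0))"

definition Delta_compatible :: "'a::ring_1 set \<Rightarrow> nat \<Rightarrow> (nat \<Rightarrow> 'a \<Rightarrow> 'a) \<Rightarrow> bool" where
  "Delta_compatible R n \<delta> \<longleftrightarrow>
     (\<forall>a\<in>R. \<forall>b\<in>R. \<forall>\<beta>. expvec n \<beta> \<longrightarrow> a * b = 0 \<longrightarrow> a * fam_pow n \<delta> \<beta> b = 0)"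

definition r_ann :: "'a::ring_1 set \<Rightarrow> 'a set \<Rightarrow> 'a set" where
  "r_ann T S = {a \<in> T. \<forall>s\<in>S. s * a = 0}"

definition l_ann :: "'a::ring_1 set \<Rightarrow> 'a set \<Rightarrow> 'a set" where
  "l_ann T S = {a \<in> T. \<forall>s\<in>S. a * s = 0}"

definition right_pq_Baer :: "'a::ring_1 set \<Rightarrow> bool" where
  "right_pq_Baer R \<longleftrightarrow> (\<forall>a\<in>R. \<exists>e\<in>R. e * e = e \<and>
      r_ann R ((\<lambda>t. a * t) ` R) = (\<lambda>t. e * t) ` R)"

definition left_pq_Baer :: "'a::ring_1 set \<Rightarrow> bool" where
  "left_pq_Baer R \<longleftrightarrow> (\<forall>a\<in>R. \<exists>e\<in>R. e * e = e \<and>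
      l_ann R ((\<lambda>t. t * a) ` R) = (\<lambda>t. t * e) ` R)"

definition fg_right_ideal :: "'a::ring_1 set \<Rightarrow> bool" where
  "fg_right_ideal I \<longleftrightarrow> (\<exists>(m::nat) g. I = {y. \<exists>t. y = (\<Sum>k<m. g k * t k)})"

definition fg_left_ideal :: "'a::ring_1 set \<Rightarrow> bool" where
  "fg_left_ideal I \<longleftrightarrow> (\<exists>(m::nat) g. I = {y. \<exists>t. y = (\<Sum>k<m. t k * g k)})"

definition ac_right :: "'a::ring_1 itself \<Rightarrow> bool" where
  "ac_right T \<longleftrightarrow> (\<forall>I::'a set. fg_right_ideal I \<longrightarrow>
      (\<exists>c. r_ann UNIV I = r_ann UNIV (range (\<lambda>t. c * t))))"

definition ac_left :: "'a::ring_1 itself \<Rightarrow> bool" where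
  "ac_left T \<longleftrightarrow> (\<forall>I::'a set. fg_left_ideal I \<longrightarrow>
      (\<exists>c. l_ann UNIV I = l_ann UNIV (range (\<lambda>t. t * c))))"

end

theory Submission
  imports Defs
begin


lemma subringD:
  assumes "subring R" "a \<in> R" "b \<in> R"
  shows "a + b \<in> R" "a - b \<in> R" "a * b \<in> R" "0 \<in> R" "1 \<in> R" "- a \<in> R"
proof -
  have "- a = 0 - a" by simp
  then show "- a \<in> R" using assms unfolding subring_def by metis
qed (use assms in \<open>auto simp: subring_def\<close>)

lemma subring_sum:
  assumes "subring R" "\<And>i. i \<in> S \<Longrightarrow> f i \<in> R"
  shows "sum f S \<in> R"
  using assms(2)
proof (induction S rule: infinite_finite_induct)
  case (infinite A) then show ?case using assms(1) by (simp add: subring_def)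
next
  case empty then show ?case using assms(1) by (simp add: subring_def)
next
  case (insert a A) then show ?case using subringD(1)[OF assms(1)] by simp
qed

locale pbw =
  fixes R :: "'a::ring_1 set" and x :: "nat \<Rightarrow> 'a" and n :: nat
    and \<sigma> \<delta> :: "nat \<Rightarrow> 'a \<Rightarrow> 'a"
  assumes bij: "bijective_skew_PBW R x n \<sigma>"
    and fam: "assoc_families R x n \<sigma> \<delta>"
    and sc: "Sigma_compatible R n \<sigma>"
    and dc: "Delta_compatible R n \<delta>"
begin

abbreviation mono where "mono \<gamma> \<equiv> std_monomial x n \<gamma>"

lemma sub: "subring R" using bij unfolding bijective_skew_PBW_def skew_PBW_def by auto
lemma free: "free_std_basis R x n" using bij unfolding bijective_skew_PBW_def skew_PBW_def by auto

lemma R0: "0 \<in> R" and R1: "1 \<in> R" using sub unfolding subring_def by auto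
lemma Radd: "a \<in> R \<Longrightarrow> b \<in> R \<Longrightarrow> a + b \<in> R" using subringD[OF sub] by auto
lemma Rdiff: "a \<in> R \<Longrightarrow> b \<in> R \<Longrightarrow> a - b \<in> R" using subringD[OF sub] by auto
lemma Rmult: "a \<in> R \<Longrightarrow> b \<in> R \<Longrightarrow> a * b \<in> R" using subringD[OF sub] by auto
lemma Rneg: "a \<in> R \<Longrightarrow> - a \<in> R" using subringD[OF sub] by auto
lemma Rsum: "(\<And>i. i \<in> S \<Longrightarrow> f i \<in> R) \<Longrightarrow> sum f S \<in> R" using subring_sum[OF sub] by auto

lemmas Rclosed = R0 R1 Radd Rdiff Rmult Rneg

definition coef :: "'a \<Rightarrow> (nat \<Rightarrow> nat) \<Rightarrow> 'a" where
  "coef a = (THE c. coeff_family R n c \<and> a = lin_comb x n c)"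

definition supp :: "((nat \<Rightarrow> nat) \<Rightarrow> 'a) \<Rightarrow> (nat \<Rightarrow> nat) set" where
  "supp c = {\<alpha>. c \<alpha> \<noteq> 0}"

lemma lin_comb_superset:
  assumes "finite S" "supp c \<subseteq> S"
  shows "lin_comb x n c = (\<Sum>\<alpha>\<in>S. c \<alpha> * mono \<alpha>)"
  unfolding lin_comb_def
  by (rule sum.mono_neutral_left) (use assms in \<open>auto simp: supp_def\<close>)

lemma cf_unique:
  assumes "coeff_family R n c1" "coeff_family R n c2" "lin_comb x n c1 = lin_comb x n c2"
  shows "c1 = c2"
proof -
  let ?c = "\<lambda>\<alpha>. c1 \<alpha> - c2 \<alpha>"
  let ?S = "supp c1 \<union> supp c2"
  have fin: "finite ?S" using assms unfolding coeff_family_def supp_def by auto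
  have s: "supp ?c \<subseteq> ?S" unfolding supp_def by auto
  have cf: "coeff_family R n ?c"
    unfolding coeff_family_def
  proof (intro conjI allI impI)
    show "finite {\<alpha>. c1 \<alpha> - c2 \<alpha> \<noteq> 0}" using fin s unfolding supp_def by (rule finite_subset[rotated]) 
  next
    fix \<alpha> show "c1 \<alpha> - c2 \<alpha> \<in> R" using assms(1,2) Rdiff unfolding coeff_family_def by auto
  next
    fix \<alpha> assume "c1 \<alpha> - c2 \<alpha> \<noteq> 0"
    then have "c1 \<alpha> \<noteq> 0 \<or> c2 \<alpha> \<noteq> 0" by auto
    then show "expvec n \<alpha>" using assms(1,2) unfolding coeff_family_def by auto
  qed
  have "lin_comb x n ?c = (\<Sum>\<alpha>\<in>?S. ?c \<alpha> * mono \<alpha>)" by (rule lin_comb_superset[OF fin s])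
  also have "\<dots> = (\<Sum>\<alpha>\<in>?S. c1 \<alpha> * mono \<alpha>) - (\<Sum>\<alpha>\<in>?S. c2 \<alpha> * mono \<alpha>)"
    by (simp add: sum_subtractf left_diff_distrib)
  also have "\<dots> = lin_comb x n c1 - lin_comb x n c2"
    using lin_comb_superset[OF fin, of c1] lin_comb_superset[OF fin, of c2] by auto
  also have "\<dots> = 0" using assms(3) by simp
  finally have "lin_comb x n ?c = 0" .
  moreover have "\<forall>c. coeff_family R n c \<and> lin_comb x n c = 0 \<longrightarrow> (\<forall>\<alpha>. c \<alpha> = 0)"
    using free unfolding free_std_basis_def by (elim conjE)
  ultimately have "\<forall>\<alpha>. ?c \<alpha> = 0" using cf by blast
  then show ?thesis by auto
qed

lemma coef_eq:
  assumes "coeff_family R n c" "a = lin_comb x n c"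
  shows "coef a = c"
  unfolding coef_def
proof (rule the_equality)
  show "coeff_family R n c \<and> a = lin_comb x n c" using assms by blast
  fix c' assume h: "coeff_family R n c' \<and> a = lin_comb x n c'"
  then have "lin_comb x n c' = lin_comb x n c" using assms(2) by metis
  then show "c' = c" using cf_unique[of c' c] assms(1) h by blast
qed

lemma coef_prop: "coeff_family R n (coef a) \<and> a = lin_comb x n (coef a)"
proof -
  have "\<forall>a::'a. \<exists>c. coeff_family R n c \<and> a = lin_comb x n c" using free unfolding free_std_basis_def by (elim conjE)
  then obtain c where "coeff_family R n c" "a = lin_comb x n c" by blast
  then have "coef a = c" by (rule coef_eq)
  then show ?thesis using \<open>coeff_family R n c\<close> \<open>a = lin_comb x n c\<close> by blast
qed

lemma coef_R: "coef a \<alpha> \<in> R" using coef_prop unfolding coeff_family_def by blast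
lemma coef_fin: "finite (supp (coef a))" using coef_prop unfolding coeff_family_def supp_def by blast
lemma coef_exp: "coef a \<alpha> \<noteq> 0 \<Longrightarrow> expvec n \<alpha>" using coef_prop unfolding coeff_family_def by blast
lemma coef_rep: "a = (\<Sum>\<alpha>\<in>supp (coef a). coef a \<alpha> * mono \<alpha>)"
proof -
  have "a = lin_comb x n (coef a)" using coef_prop by blast
  then show ?thesis unfolding lin_comb_def supp_def .
qed
lemma coef_rep_S: "finite S \<Longrightarrow> supp (coef a) \<subseteq> S \<Longrightarrow> a = (\<Sum>\<alpha>\<in>S. coef a \<alpha> * mono \<alpha>)"
proof -
  assume "finite S" "supp (coef a) \<subseteq> S"
  have "a = lin_comb x n (coef a)" using coef_prop by blast
  also have "\<dots> = (\<Sum>\<alpha>\<in>S. coef a \<alpha> * mono \<alpha>)" by (rule lin_comb_superset) fact+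
  finally show ?thesis .
qed

lemma exp_add: "coef a \<alpha> + coef b \<alpha> \<noteq> 0 \<Longrightarrow> expvec n \<alpha>"
proof -
  assume h: "coef a \<alpha> + coef b \<alpha> \<noteq> 0"
  show ?thesis
  proof (cases "coef a \<alpha> = 0")
    case True then show ?thesis using h coef_exp[of b] by simp
  next
    case False then show ?thesis using coef_exp by blast
  qed
qed

lemma exp_mult: "r * coef a \<alpha> \<noteq> 0 \<Longrightarrow> expvec n \<alpha>"
proof -
  assume h: "r * coef a \<alpha> \<noteq> 0"
  then have "coef a \<alpha> \<noteq> 0" by auto
  then show ?thesis using coef_exp by blast
qed

lemma coef_sum_rep:
  assumes "finite S" "\<And>\<alpha>. c \<alpha> \<in> R" "\<And>\<alpha>. c \<alpha> \<noteq> 0 \<Longrightarrow> \<alpha> \<in> S \<and> expvec n \<alpha>"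
  shows "coef (\<Sum>\<alpha>\<in>S. c \<alpha> * mono \<alpha>) = c"
proof (rule coef_eq)
  have "supp c \<subseteq> S" using assms(3) unfolding supp_def by auto
  then have "finite {\<alpha>. c \<alpha> \<noteq> 0}" using assms(1) finite_subset unfolding supp_def by blast
  then show cf: "coeff_family R n c" unfolding coeff_family_def using assms(2,3) by blast
  show "(\<Sum>\<alpha>\<in>S. c \<alpha> * mono \<alpha>) = lin_comb x n c"
    using lin_comb_superset[OF assms(1) \<open>supp c \<subseteq> S\<close>] by simp
qed

lemma coef_add: "coef (a + b) = (\<lambda>\<alpha>. coef a \<alpha> + coef b \<alpha>)"
proof -
  let ?S = "supp (coef a) \<union> supp (coef b)"
  have fin: "finite ?S" using coef_fin by auto
  have "(\<Sum>\<alpha>\<in>?S. (coef a \<alpha> + coef b \<alpha>) * mono \<alpha>) = (\<Sum>\<alpha>\<in>?S. coef a \<alpha> * mono \<alpha>) + (\<Sum>\<alpha>\<in>?S. coef b \<alpha> * mono \<alpha>)"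
    by (simp add: sum.distrib distrib_right)
  also have "\<dots> = a + b"
    using coef_rep_S[OF fin, of a] coef_rep_S[OF fin, of b] by (metis Un_upper1 Un_upper2)
  finally have eq: "a + b = (\<Sum>\<alpha>\<in>?S. (coef a \<alpha> + coef b \<alpha>) * mono \<alpha>)" by (rule sym)
  show ?thesis unfolding eq
  proof (rule coef_sum_rep[OF fin])
    fix \<alpha> show "coef a \<alpha> + coef b \<alpha> \<in> R" by (simp add: Radd coef_R)
    assume h: "coef a \<alpha> + coef b \<alpha> \<noteq> 0"
    then have "\<alpha> \<in> ?S" unfolding supp_def by auto
    then show "\<alpha> \<in> ?S \<and> expvec n \<alpha>" using exp_add[OF h] by blast
  qed
qed

lemma coef_mult: assumes "r \<in> R" shows "coef (r * a) = (\<lambda>\<alpha>. r * coef a \<alpha>)"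
proof -
  let ?S = "supp (coef a)"
  have fin: "finite ?S" using coef_fin by auto
  have "(\<Sum>\<alpha>\<in>?S. (r * coef a \<alpha>) * mono \<alpha>) = r * (\<Sum>\<alpha>\<in>?S. coef a \<alpha> * mono \<alpha>)"
    by (simp add: sum_distrib_left mult.assoc)
  also have "\<dots> = r * a" using coef_rep[of a] by metis
  finally have eq: "r * a = (\<Sum>\<alpha>\<in>?S. (r * coef a \<alpha>) * mono \<alpha>)" by (rule sym)
  show ?thesis unfolding eq
  proof (rule coef_sum_rep[OF fin])
    fix \<alpha> show "r * coef a \<alpha> \<in> R" by (simp add: Rmult coef_R assms)
    assume h: "r * coef a \<alpha> \<noteq> 0"
    then have "\<alpha> \<in> ?S" unfolding supp_def by auto
    then show "\<alpha> \<in> ?S \<and> expvec n \<alpha>" using exp_mult[OF h] by blast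
  qed
qed

lemma coef_zero: "coef 0 = (\<lambda>\<alpha>. 0)"
  using coef_mult[OF R0, of 0] by simp

lemma coef_neg: "coef (- a) = (\<lambda>\<alpha>. - coef a \<alpha>)"
  using coef_mult[OF Rneg[OF R1], of a] by simp

lemma coef_diff: "coef (a - b) = (\<lambda>\<alpha>. coef a \<alpha> - coef b \<alpha>)"
  using coef_add[of a "- b"] coef_neg[of b] by simp

lemma coef_single: assumes "c \<in> R" "expvec n \<gamma>"
  shows "coef (c * mono \<gamma>) = (\<lambda>\<alpha>. if \<alpha> = \<gamma> then c else 0)"
proof -
  have eq: "c * mono \<gamma> = (\<Sum>\<alpha>\<in>{\<gamma>}. (if \<alpha> = \<gamma> then c else 0) * mono \<alpha>)" by simp
  show ?thesis unfolding eq
    by (rule coef_sum_rep) (auto simp: assms R0 split: if_splits)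
qed

lemma coef_sum: "coef (sum f S) = (\<lambda>\<alpha>. \<Sum>s\<in>S. coef (f s) \<alpha>)"
proof (induction S rule: infinite_finite_induct)
  case (infinite A) then show ?case by (simp add: coef_zero)
next
  case empty then show ?case by (simp add: coef_zero)
next
  case (insert a A) then show ?case by (simp add: coef_add)
qed

lemma coef_eq0: "(\<forall>\<alpha>. coef a \<alpha> = 0) \<longleftrightarrow> a = 0"
proof
  assume "\<forall>\<alpha>. coef a \<alpha> = 0"
  then have "supp (coef a) = {}" unfolding supp_def by auto
  then show "a = 0" using coef_rep[of a] by (metis sum.empty)
qed (simp add: coef_zero)

lemma R_is_const: assumes "c \<in> R" shows "coef c = (\<lambda>\<alpha>. if \<alpha> = (\<lambda>_. 0) then c else 0)"
proof -
  have "mono (\<lambda>_. 0) = 1" unfolding std_monomial_def by (induction n) auto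
  then show ?thesis using coef_single[OF assms, of "\<lambda>_. 0"] by (simp add: expvec_def)
qed

end


definition inc :: "(nat \<Rightarrow> nat) \<Rightarrow> nat \<Rightarrow> nat \<Rightarrow> nat" where
  "inc \<gamma> i = \<gamma>(i := Suc (\<gamma> i))"

definition e1 :: "nat \<Rightarrow> nat \<Rightarrow> nat" where "e1 i = inc (\<lambda>_. 0) i"

lemma foldr_zero:
  "(\<forall>k\<in>set xs. \<gamma> k = 0) \<Longrightarrow> foldr (\<lambda>k acc. (x k :: 'a::monoid_mult) ^ \<gamma> k * acc) xs z = z"
  by (induction xs) auto

lemma foldr_cong_exp:
  "(\<forall>k\<in>set xs. \<gamma> k = \<gamma>' k) \<Longrightarrow>
   foldr (\<lambda>k acc. (x k :: 'a::monoid_mult) ^ \<gamma> k * acc) xs z = foldr (\<lambda>k acc. x k ^ \<gamma>' k * acc) xs z"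
  by (induction xs) auto

lemma mono_inc:
  assumes "i < n" "\<forall>k<i. \<gamma> k = 0"
  shows "x i * std_monomial x n \<gamma> = std_monomial x n (inc \<gamma> i)"
proof -
  have split: "[0..<n] = [0..<i] @ i # [Suc i..<n]"
    using assms(1) by (metis le0 upt_add_eq_append upt_conv_Cons add_0 le_add_diff_inverse less_imp_le)
  let ?g = "inc \<gamma> i"
  have z1: "\<forall>k\<in>set [0..<i]. \<gamma> k = 0" using assms(2) by auto
  have z2: "\<forall>k\<in>set [0..<i]. ?g k = 0" using assms(2) by (auto simp: inc_def)
  have c: "\<forall>k\<in>set [Suc i..<n]. ?g k = \<gamma> k" by (auto simp: inc_def)
  show ?thesis
    unfolding std_monomial_def split foldr_append
    using foldr_zero[OF z1, of x] foldr_zero[OF z2, of x] foldr_cong_exp[OF c, of x]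
    by (simp add: inc_def mult.assoc)
qed

lemma mono_zero: "std_monomial x n (\<lambda>_. 0) = 1"
  unfolding std_monomial_def by (rule foldr_zero) auto

lemma mono_e1: "i < n \<Longrightarrow> std_monomial x n (e1 i) = x i"
  using mono_inc[of i n "\<lambda>_. 0" x] mono_zero[of x n] unfolding e1_def by simp

lemma expvec_inc: "expvec n \<gamma> \<Longrightarrow> i < n \<Longrightarrow> expvec n (inc \<gamma> i)"
  unfolding expvec_def inc_def by auto

lemma expvec_e1: "i < n \<Longrightarrow> expvec n (e1 i)"
  unfolding e1_def using expvec_inc[of n "\<lambda>_. 0" i] by (simp add: expvec_def)

lemma e1_ne0: "e1 i \<noteq> (\<lambda>_. 0)"
  unfolding e1_def inc_def by (metis fun_upd_same nat.distinct(1))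

lemma fam_pow_list:
  "distinct xs \<Longrightarrow> foldr (\<lambda>k g. (f k ^^ (e1 i k)) \<circ> g) xs id = (if i \<in> set xs then f i else id)"
  by (induction xs) (auto simp: e1_def inc_def)

lemma fam_pow_e1: "i < n \<Longrightarrow> fam_pow n f (e1 i) = f i"
  unfolding fam_pow_def using fam_pow_list[where xs="[0..<n]" and f=f and i=i] by simp

context pbw begin

lemma famD: "i < n \<Longrightarrow> r \<in> R \<Longrightarrow> \<sigma> i r \<in> R \<and> \<delta> i r \<in> R \<and> x i * r = \<sigma> i r * x i + \<delta> i r"
  using fam unfolding assoc_families_def by blast

lemma sigR: "i < n \<Longrightarrow> r \<in> R \<Longrightarrow> \<sigma> i r \<in> R" using famD by blast
lemma delR: "i < n \<Longrightarrow> r \<in> R \<Longrightarrow> \<delta> i r \<in> R" using famD by blast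
lemma comm: "i < n \<Longrightarrow> r \<in> R \<Longrightarrow> x i * r = \<sigma> i r * x i + \<delta> i r" using famD by blast

lemma sep:
  assumes "i < n" "s1 \<in> R" "t1 \<in> R" "s2 \<in> R" "t2 \<in> R"
    and "s1 * x i + t1 = s2 * x i + t2"
  shows "s1 = s2 \<and> t1 = t2"
proof -
  have ex: "expvec n (e1 i)" "expvec n (\<lambda>_. 0)" using expvec_e1[OF assms(1)] by (auto simp: expvec_def)
  have cf: "coef (s * x i + t) = (\<lambda>\<alpha>. (if \<alpha> = e1 i then s else 0) + (if \<alpha> = (\<lambda>_. 0) then t else 0))"
    if "s \<in> R" "t \<in> R" for s t
  proof -
    have "s * x i + t = s * mono (e1 i) + t * mono (\<lambda>_. 0)"
      using mono_e1[OF assms(1), of x] mono_zero[of x n] by simp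
    then show ?thesis using coef_add coef_single[OF that(1) ex(1)] coef_single[OF that(2) ex(2)] by simp
  qed
  have "coef (s1 * x i + t1) = coef (s2 * x i + t2)" using assms(6) by simp
  then have h: "\<And>\<alpha>. (if \<alpha> = e1 i then s1 else 0) + (if \<alpha> = (\<lambda>_. 0) then t1 else 0)
      = (if \<alpha> = e1 i then s2 else 0) + (if \<alpha> = (\<lambda>_. 0) then t2 else 0)"
    using cf[OF assms(2,3)] cf[OF assms(4,5)] by metis
  from h[of "e1 i"] h[of "\<lambda>_. 0"] e1_ne0[of i] show ?thesis by simp
qed

lemma sig_mult: assumes "i < n" "r \<in> R" "s \<in> R"
  shows "\<sigma> i (r * s) = \<sigma> i r * \<sigma> i s" and "\<delta> i (r * s) = \<sigma> i r * \<delta> i s + \<delta> i r * s"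
proof -
  have "x i * (r * s) = (x i * r) * s" by (simp add: mult.assoc)
  also have "\<dots> = \<sigma> i r * (x i * s) + \<delta> i r * s" using comm[OF assms(1,2)] by (simp add: distrib_right mult.assoc)
  also have "\<dots> = (\<sigma> i r * \<sigma> i s) * x i + (\<sigma> i r * \<delta> i s + \<delta> i r * s)"
    using comm[OF assms(1,3)] by (simp add: distrib_left mult.assoc add.assoc)
  finally have eq: "\<sigma> i (r * s) * x i + \<delta> i (r * s) = (\<sigma> i r * \<sigma> i s) * x i + (\<sigma> i r * \<delta> i s + \<delta> i r * s)"
    using comm[OF assms(1) Rmult[OF assms(2,3)]] by simp
  have m: "r * s \<in> R" using Rmult assms by blast
  have "\<sigma> i (r * s) = \<sigma> i r * \<sigma> i s \<and> \<delta> i (r * s) = \<sigma> i r * \<delta> i s + \<delta> i r * s"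
    by (rule sep[OF assms(1) sigR[OF assms(1) m] delR[OF assms(1) m] _ _ eq])
      (auto intro!: Rmult Radd sigR delR assms)
  then show "\<sigma> i (r * s) = \<sigma> i r * \<sigma> i s" "\<delta> i (r * s) = \<sigma> i r * \<delta> i s + \<delta> i r * s" by auto
qed

lemma sig_add: assumes "i < n" "r \<in> R" "s \<in> R"
  shows "\<sigma> i (r + s) = \<sigma> i r + \<sigma> i s" and "\<delta> i (r + s) = \<delta> i r + \<delta> i s"
proof -
  have m: "r + s \<in> R" using Radd assms by blast
  have "x i * (r + s) = x i * r + x i * s" by (simp add: distrib_left)
  also have "\<dots> = (\<sigma> i r + \<sigma> i s) * x i + (\<delta> i r + \<delta> i s)"
    using comm[OF assms(1,2)] comm[OF assms(1,3)] by (simp add: algebra_simps)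
  finally have eq: "\<sigma> i (r + s) * x i + \<delta> i (r + s) = (\<sigma> i r + \<sigma> i s) * x i + (\<delta> i r + \<delta> i s)"
    using comm[OF assms(1) m] by simp
  have "\<sigma> i (r + s) = \<sigma> i r + \<sigma> i s \<and> \<delta> i (r + s) = \<delta> i r + \<delta> i s"
    by (rule sep[OF assms(1) sigR[OF assms(1) m] delR[OF assms(1) m] _ _ eq])
      (auto intro!: Rmult Radd sigR delR assms)
  then show "\<sigma> i (r + s) = \<sigma> i r + \<sigma> i s" "\<delta> i (r + s) = \<delta> i r + \<delta> i s" by auto
qed

lemma sig_one: assumes "i < n" shows "\<sigma> i 1 = 1" and "\<delta> i 1 = 0"
proof -
  have eq: "\<sigma> i 1 * x i + \<delta> i 1 = 1 * x i + 0" using comm[OF assms R1] by simp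
  have "\<sigma> i 1 = 1 \<and> \<delta> i 1 = 0"
    by (rule sep[OF assms sigR[OF assms R1] delR[OF assms R1] R1 R0 eq])
  then show "\<sigma> i 1 = 1" "\<delta> i 1 = 0" by auto
qed

lemma sig_diff: assumes "i < n" "r \<in> R" "s \<in> R"
  shows "\<sigma> i (r - s) = \<sigma> i r - \<sigma> i s" and "\<delta> i (r - s) = \<delta> i r - \<delta> i s"
proof -
  have m: "r - s \<in> R" using Rdiff assms by blast
  have "\<sigma> i r = \<sigma> i (r - s + s)" "\<delta> i r = \<delta> i (r - s + s)" by simp_all
  then show "\<sigma> i (r - s) = \<sigma> i r - \<sigma> i s" "\<delta> i (r - s) = \<delta> i r - \<delta> i s"
    using sig_add[OF assms(1) m assms(3)] by simp_all
qed

lemma csig: assumes "i < n" "a \<in> R" "b \<in> R" shows "a * \<sigma> i b = 0 \<longleftrightarrow> a * b = 0"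
  using sc assms expvec_e1[OF assms(1)] fam_pow_e1[OF assms(1), of \<sigma>]
  unfolding Sigma_compatible_def by metis

lemma cdel: assumes "i < n" "a \<in> R" "b \<in> R" "a * b = 0" shows "a * \<delta> i b = 0"
  using dc assms expvec_e1[OF assms(1)] fam_pow_e1[OF assms(1), of \<delta>]
  unfolding Delta_compatible_def by metis

lemma unit_mult: "unit_in R u \<Longrightarrow> unit_in R v \<Longrightarrow> unit_in R (u * v)"
  unfolding unit_in_def
proof (elim conjE bexE, intro conjI bexI)
  fix e f assume "u \<in> R" "v \<in> R" "e \<in> R" "f \<in> R" "u * e = 1" "e * u = 1" "v * f = 1" "f * v = 1"
  show "u * v \<in> R" by (rule Rmult) fact+
  show "f * e \<in> R" by (rule Rmult) fact+
  have "u * v * (f * e) = u * (v * f) * e" by (simp add: mult.assoc)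
  then show "u * v * (f * e) = 1" using \<open>v * f = 1\<close> \<open>u * e = 1\<close> by simp
  have "f * e * (u * v) = f * (e * u) * v" by (simp add: mult.assoc)
  then show "f * e * (u * v) = 1" using \<open>f * v = 1\<close> \<open>e * u = 1\<close> by simp
qed

lemma unit_sig: assumes "i < n" "unit_in R u" shows "unit_in R (\<sigma> i u)"
proof -
  obtain e where e: "u \<in> R" "e \<in> R" "u * e = 1" "e * u = 1" using assms(2) unfolding unit_in_def by blast
  have "\<sigma> i u * \<sigma> i e = 1" using sig_mult(1)[OF assms(1) e(1,2)] e(3) sig_one[OF assms(1)] by simp
  moreover have "\<sigma> i e * \<sigma> i u = 1" using sig_mult(1)[OF assms(1) e(2,1)] e(4) sig_one[OF assms(1)] by simp
  ultimately show ?thesis unfolding unit_in_def using sigR[OF assms(1)] e by blast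
qed

lemma unit_one: "unit_in R 1" unfolding unit_in_def using R1 by auto

lemma unit_cancel: assumes "unit_in R u" "a * u = 0" shows "a = 0"
proof -
  obtain e where "u * e = 1" using assms(1) unfolding unit_in_def by blast
  then have "a = a * u * e" by (simp add: mult.assoc)
  then show ?thesis using assms(2) by simp
qed

lemma unitR: "unit_in R u \<Longrightarrow> u \<in> R" unfolding unit_in_def by blast

lemma idem_sig: assumes "i < n" "e \<in> R" "e * e = e"
  shows "\<sigma> i e = e" and "\<delta> i e = 0"
proof -
  have ome: "1 - e \<in> R" using Rdiff R1 assms(2) by blast
  have a1: "(1 - e) * e = 0" using assms(3) by (simp add: algebra_simps)
  have a2: "e * (1 - e) = 0" using assms(3) by (simp add: algebra_simps)
  have "(1 - e) * \<sigma> i e = 0" using csig[OF assms(1) ome assms(2)] a1 by simp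
  then have s1: "\<sigma> i e = e * \<sigma> i e" by (simp add: algebra_simps)
  have "e * \<sigma> i (1 - e) = 0" using csig[OF assms(1) assms(2) ome] a2 by simp
  then have "e * (1 - \<sigma> i e) = 0" using sig_diff(1)[OF assms(1) R1 assms(2)] sig_one[OF assms(1)] by simp
  then have s2: "e = e * \<sigma> i e" by (simp add: algebra_simps)
  show se: "\<sigma> i e = e" using s1 s2 by simp
  have d: "\<delta> i e = e * \<delta> i e + \<delta> i e * e"
    using sig_mult(2)[OF assms(1) assms(2) assms(2)] se assms(3) by simp
  have "(1 - e) * \<delta> i e = 0" using cdel[OF assms(1) ome assms(2) a1] .
  then have d1: "\<delta> i e = e * \<delta> i e" by (simp add: algebra_simps)
  have "e * \<delta> i (1 - e) = 0" using cdel[OF assms(1) assms(2) ome a2] .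
  then have "e * \<delta> i e = 0" using sig_diff(2)[OF assms(1) R1 assms(2)] sig_one[OF assms(1)] by simp
  then show "\<delta> i e = 0" using d1 by simp
qed

lemma idem_comm_x: assumes "i < n" "e \<in> R" "e * e = e" shows "x i * e = e * x i"
  using comm[OF assms(1,2)] idem_sig[OF assms] by simp

lemma idem_comm_pow: assumes "i < n" "e \<in> R" "e * e = e" shows "x i ^ k * e = e * x i ^ k"
proof (induction k)
  case (Suc k)
  have "x i ^ Suc k * e = x i * (x i ^ k * e)" by (simp add: mult.assoc)
  also have "\<dots> = (x i * e) * x i ^ k" using Suc by (simp add: mult.assoc)
  also have "\<dots> = e * x i ^ Suc k" using idem_comm_x[OF assms] by (simp add: mult.assoc)
  finally show ?case .
qed simp

lemma idem_comm_mono: assumes "e \<in> R" "e * e = e" shows "mono \<gamma> * e = e * mono \<gamma>"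
proof -
  have "\<forall>k\<in>set xs. k < n \<Longrightarrow> foldr (\<lambda>k acc. x k ^ \<gamma> k * acc) xs 1 * e = e * foldr (\<lambda>k acc. x k ^ \<gamma> k * acc) xs 1" for xs
  proof (induction xs)
    case (Cons k xs)
    then have "foldr (\<lambda>k acc. x k ^ \<gamma> k * acc) (k # xs) 1 * e = x k ^ \<gamma> k * (e * foldr (\<lambda>k acc. x k ^ \<gamma> k * acc) xs 1)"
      by (simp add: mult.assoc)
    also have "\<dots> = e * foldr (\<lambda>k acc. x k ^ \<gamma> k * acc) (k # xs) 1"
      using idem_comm_pow[OF _ assms, of k "\<gamma> k"] Cons.prems by (simp add: mult.assoc[symmetric])
    finally show ?case .
  qed simp
  then show ?thesis unfolding std_monomial_def by simp
qed

end


context pbw begin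

lemma mult_rep: "t * w = (\<Sum>\<alpha>\<in>supp (coef t). coef t \<alpha> * (mono \<alpha> * w))"
proof -
  have "t * w = (\<Sum>\<alpha>\<in>supp (coef t). coef t \<alpha> * mono \<alpha>) * w"
    using coef_rep[of t] by (rule arg_cong[where f="\<lambda>z. z * w"])
  also have "\<dots> = (\<Sum>\<alpha>\<in>supp (coef t). coef t \<alpha> * (mono \<alpha> * w))"
    by (simp add: sum_distrib_right mult.assoc)
  finally show ?thesis .
qed

lemma supp_I: "coef t \<alpha> \<noteq> 0 \<Longrightarrow> \<alpha> \<in> supp (coef t)" unfolding supp_def by simp

lemma coef_mult_idem: assumes "e \<in> R" "e * e = e"
  shows "coef (t * e) = (\<lambda>\<alpha>. coef t \<alpha> * e)"
proof -
  have "t * e = (\<Sum>\<alpha>\<in>supp (coef t). coef t \<alpha> * (mono \<alpha> * e))" by (rule mult_rep)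
  also have "\<dots> = (\<Sum>\<alpha>\<in>supp (coef t). (coef t \<alpha> * e) * mono \<alpha>)"
    using idem_comm_mono[OF assms] by (simp add: mult.assoc)
  finally have eq: "t * e = (\<Sum>\<alpha>\<in>supp (coef t). (coef t \<alpha> * e) * mono \<alpha>)" .
  show ?thesis unfolding eq
  proof (rule coef_sum_rep[OF coef_fin])
    fix \<alpha> show "coef t \<alpha> * e \<in> R" by (simp add: Rmult coef_R assms)
    assume "coef t \<alpha> * e \<noteq> 0"
    then have "coef t \<alpha> \<noteq> 0" by auto
    then show "\<alpha> \<in> supp (coef t) \<and> expvec n \<alpha>" using supp_I coef_exp by blast
  qed
qed

lemma left_semi_A: assumes "e \<in> R" "e * e = e" "\<forall>r\<in>R. r * e = e * r * e"
  shows "t * e = e * t * e"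
proof -
  have "t * e = (\<Sum>\<alpha>\<in>supp (coef t). coef t \<alpha> * (mono \<alpha> * e))" by (rule mult_rep)
  also have "\<dots> = (\<Sum>\<alpha>\<in>supp (coef t). (coef t \<alpha> * e) * mono \<alpha>)"
    using idem_comm_mono[OF assms(1,2)] by (simp add: mult.assoc)
  also have "\<dots> = (\<Sum>\<alpha>\<in>supp (coef t). (e * coef t \<alpha> * e) * mono \<alpha>)"
    using assms(3) coef_R by simp
  also have "\<dots> = e * (\<Sum>\<alpha>\<in>supp (coef t). coef t \<alpha> * (mono \<alpha> * e))"
    using idem_comm_mono[OF assms(1,2)] by (simp add: mult.assoc sum_distrib_left)
  also have "\<dots> = e * (t * e)" using mult_rep[of t e] by simp
  finally show ?thesis by (simp add: mult.assoc)
qed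

lemma right_semi_A: assumes "e \<in> R" "e * e = e" "\<forall>r\<in>R. e * r = e * r * e"
  shows "e * t = e * t * e"
proof -
  have "e * t = e * (\<Sum>\<alpha>\<in>supp (coef t). coef t \<alpha> * mono \<alpha>)"
    using coef_rep[of t] by (rule arg_cong)
  also have "\<dots> = (\<Sum>\<alpha>\<in>supp (coef t). (e * coef t \<alpha>) * mono \<alpha>)"
    by (simp add: sum_distrib_left mult.assoc)
  also have "\<dots> = (\<Sum>\<alpha>\<in>supp (coef t). (e * coef t \<alpha> * e) * mono \<alpha>)"
    using assms(3) coef_R by simp
  also have "\<dots> = (\<Sum>\<alpha>\<in>supp (coef t). e * (coef t \<alpha> * (mono \<alpha> * e)))"
    using idem_comm_mono[OF assms(1,2)] by (simp add: mult.assoc)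
  also have "\<dots> = e * (t * e)" using mult_rep[of t e] by (simp add: sum_distrib_left)
  finally have "e * t = e * (t * e)" .
  then show ?thesis by (metis mult.assoc)
qed

definition Jset :: "'a \<Rightarrow> 'a set" where
  "Jset f = {b \<in> R. \<forall>\<alpha>. \<forall>r\<in>R. coef f \<alpha> * r * b = 0}"

definition good :: "'a \<Rightarrow> 'a \<Rightarrow> bool" where
  "good f v \<longleftrightarrow> (\<forall>\<beta>. coef v \<beta> \<in> Jset f)"

lemma J0: "0 \<in> Jset f" unfolding Jset_def using R0 by simp
lemma Jadd: "b \<in> Jset f \<Longrightarrow> c \<in> Jset f \<Longrightarrow> b + c \<in> Jset f"
  unfolding Jset_def using Radd by (auto simp: distrib_left)
lemma Jsum: "(\<And>s. s \<in> S \<Longrightarrow> F s \<in> Jset f) \<Longrightarrow> sum F S \<in> Jset f"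
proof (induction S rule: infinite_finite_induct)
  case (insert a A) then show ?case using Jadd by simp
qed (auto simp: J0)
lemma JR: "b \<in> Jset f \<Longrightarrow> b \<in> R" unfolding Jset_def by simp
lemma Jlmult: assumes "b \<in> Jset f" "r \<in> R" shows "r * b \<in> Jset f"
  unfolding Jset_def
proof (intro CollectI conjI allI ballI)
  show "r * b \<in> R" using assms JR Rmult by blast
  fix \<alpha> s assume "s \<in> R"
  then have "coef f \<alpha> * (s * r) * b = 0" using assms Rmult unfolding Jset_def by blast
  then show "coef f \<alpha> * s * (r * b) = 0" by (simp add: mult.assoc)
qed
lemma Jrmult: "b \<in> Jset f \<Longrightarrow> r \<in> R \<Longrightarrow> b * r \<in> Jset f"
  unfolding Jset_def using Rmult by (auto simp: mult.assoc[symmetric])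
lemma Jsig: assumes "b \<in> Jset f" "i < n" shows "\<sigma> i b \<in> Jset f" "\<delta> i b \<in> Jset f"
proof -
  have bR: "b \<in> R" using assms(1) JR by blast
  show "\<sigma> i b \<in> Jset f" unfolding Jset_def
  proof (intro CollectI conjI allI ballI)
    show "\<sigma> i b \<in> R" using sigR[OF assms(2) bR] .
    fix \<alpha> r assume r: "r \<in> R"
    have "coef f \<alpha> * r * b = 0" using assms(1) r unfolding Jset_def by blast
    then show "coef f \<alpha> * r * \<sigma> i b = 0" using csig[OF assms(2) Rmult[OF coef_R r] bR] by simp
  qed
  show "\<delta> i b \<in> Jset f" unfolding Jset_def
  proof (intro CollectI conjI allI ballI)
    show "\<delta> i b \<in> R" using delR[OF assms(2) bR] .
    fix \<alpha> r assume r: "r \<in> R"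
    have "coef f \<alpha> * r * b = 0" using assms(1) r unfolding Jset_def by blast
    then show "coef f \<alpha> * r * \<delta> i b = 0" using cdel[OF assms(2) Rmult[OF coef_R r] bR] by simp
  qed
qed

lemma good0: "good f 0" unfolding good_def coef_zero using J0 by simp
lemma good_add: "good f v \<Longrightarrow> good f w \<Longrightarrow> good f (v + w)"
  unfolding good_def coef_add using Jadd by simp
lemma good_sum: assumes "\<And>s. s \<in> S \<Longrightarrow> good f (F s)" shows "good f (sum F S)"
  unfolding good_def coef_sum
proof
  fix \<beta> show "(\<Sum>s\<in>S. coef (F s) \<beta>) \<in> Jset f"
    by (rule Jsum) (use assms in \<open>auto simp: good_def\<close>)
qed
lemma good_J: "b \<in> Jset f \<Longrightarrow> good f (b * w)"
  unfolding good_def using coef_mult[OF JR] Jrmult coef_R by simp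
lemma good_single: "b \<in> Jset f \<Longrightarrow> good f (b * w)" by (rule good_J)

lemma good_rep: "good f v \<Longrightarrow> v = (\<Sum>\<gamma>\<in>supp (coef v). coef v \<gamma> * mono \<gamma>) \<and> (\<forall>\<gamma>. coef v \<gamma> \<in> Jset f)"
  using coef_rep unfolding good_def by blast

lemma good_x: assumes "good f v" "i < n" shows "good f (x i * v)"
proof -
  have J: "\<And>\<gamma>. coef v \<gamma> \<in> Jset f" using assms(1) unfolding good_def by blast
  have "x i * v = x i * (\<Sum>\<gamma>\<in>supp (coef v). coef v \<gamma> * mono \<gamma>)"
    using coef_rep[of v] by (rule arg_cong)
  also have "\<dots> = (\<Sum>\<gamma>\<in>supp (coef v). \<sigma> i (coef v \<gamma>) * (x i * mono \<gamma>) + \<delta> i (coef v \<gamma>) * mono \<gamma>)"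
    by (simp add: sum_distrib_left mult.assoc[symmetric] comm[OF assms(2) coef_R] distrib_right)
  finally have eq: "x i * v = \<dots>" .
  show ?thesis unfolding eq
    by (rule good_sum, rule good_add) (auto intro!: good_J Jsig J assms(2))
qed

lemma good_xpow: assumes "good f v" "i < n" shows "good f (x i ^ k * v)"
  by (induction k) (auto simp: mult.assoc intro: good_x assms)

lemma good_mono: assumes "good f v" shows "good f (mono \<alpha> * v)"
proof -
  have "\<forall>k\<in>set xs. k < n \<Longrightarrow> good f (foldr (\<lambda>k acc. x k ^ \<alpha> k * acc) xs 1 * v)" for xs
  proof (induction xs)
    case Nil then show ?case using assms by simp
  next
    case (Cons k xs)
    then have "good f (x k ^ \<alpha> k * (foldr (\<lambda>k acc. x k ^ \<alpha> k * acc) xs 1 * v))"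
      by (intro good_xpow) auto
    then show ?case by (simp add: mult.assoc)
  qed
  then show ?thesis unfolding std_monomial_def by simp
qed

lemma good_lmult: assumes "good f v" shows "good f (t * v)"
proof -
  have "t * v = (\<Sum>\<alpha>\<in>supp (coef t). coef t \<alpha> * (mono \<alpha> * v))" by (rule mult_rep)
  moreover have "good f (coef t \<alpha> * (mono \<alpha> * v))" for \<alpha>
    using good_mono[OF assms, of \<alpha>] Jlmult coef_R coef_mult[OF coef_R]
    unfolding good_def by simp
  ultimately show ?thesis using good_sum[of "supp (coef t)" f "\<lambda>\<alpha>. coef t \<alpha> * (mono \<alpha> * v)"] by simp
qed

lemma good_kill: assumes "good f v" shows "coef f \<alpha> * v = 0"
proof -
  have "coef f \<alpha> * v = coef f \<alpha> * (\<Sum>\<gamma>\<in>supp (coef v). coef v \<gamma> * mono \<gamma>)"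
    using coef_rep[of v] by (rule arg_cong)
  also have "\<dots> = (\<Sum>\<gamma>\<in>supp (coef v). (coef f \<alpha> * 1 * coef v \<gamma>) * mono \<gamma>)"
    by (simp add: sum_distrib_left mult.assoc)
  also have "\<dots> = 0"
  proof (intro sum.neutral ballI)
    fix \<gamma> have "coef f \<alpha> * 1 * coef v \<gamma> = 0" using assms R1 unfolding good_def Jset_def by blast
    then show "coef f \<alpha> * 1 * coef v \<gamma> * mono \<gamma> = 0" by simp
  qed
  finally show ?thesis .
qed

lemma arm_easy: assumes "\<forall>\<alpha> \<beta>. \<forall>r\<in>R. coef f \<alpha> * r * coef h \<beta> = 0"
  shows "f * t * h = 0"
proof -
  have gh: "good f h" unfolding good_def Jset_def using assms coef_R by blast
  have "f * t * h = (\<Sum>\<alpha>\<in>supp (coef f). coef f \<alpha> * (mono \<alpha> * (t * h)))"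
    using mult_rep[of f "t * h"] by (simp add: mult.assoc)
  also have "\<dots> = 0"
    by (rule sum.neutral) (auto intro!: good_kill good_mono good_lmult gh)
  finally show ?thesis .
qed

end


definition vadd :: "(nat \<Rightarrow> nat) \<Rightarrow> (nat \<Rightarrow> nat) \<Rightarrow> nat \<Rightarrow> nat" where
  "vadd \<alpha> \<beta> = (\<lambda>k. \<alpha> k + \<beta> k)"

definition degn :: "nat \<Rightarrow> (nat \<Rightarrow> nat) \<Rightarrow> nat" where
  "degn n \<gamma> = sum \<gamma> {..<n}"

lemma inc_alt: "inc \<gamma> i = (\<lambda>k. \<gamma> k + (if k = i then 1 else 0))"
  unfolding inc_def by auto

lemma deg_inc: "i < n \<Longrightarrow> degn n (inc \<gamma> i) = degn n \<gamma> + 1"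
  unfolding degn_def inc_alt by (simp add: sum.distrib)

lemma deg_vadd: "degn n (vadd \<alpha> \<beta>) = degn n \<alpha> + degn n \<beta>"
  unfolding degn_def vadd_def by (simp add: sum.distrib)

lemma expvec_vadd: "expvec n \<alpha> \<Longrightarrow> expvec n \<beta> \<Longrightarrow> expvec n (vadd \<alpha> \<beta>)"
  unfolding expvec_def vadd_def by auto

lemma vadd_zero: "vadd (\<lambda>_. 0) \<beta> = \<beta>" unfolding vadd_def by simp

lemma inc_vadd: "inc (vadd \<alpha> \<beta>) j = vadd (inc \<alpha> j) \<beta>"
  unfolding vadd_def inc_def by auto

lemma inc_inc: "inc (inc \<gamma> i) j = inc (inc \<gamma> j) i"
  unfolding inc_def by (auto simp: fun_upd_twist)

lemma deg0: assumes "expvec n \<gamma>" "degn n \<gamma> = 0" shows "\<gamma> = (\<lambda>_. 0)"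
proof
  fix k show "\<gamma> k = 0"
  proof (cases "k < n")
    case True then show ?thesis using assms(2) unfolding degn_def by simp
  next
    case False then show ?thesis using assms(1) unfolding expvec_def by simp
  qed
qed

lemma first_nz:
  assumes "expvec n \<gamma>" "\<gamma> \<noteq> (\<lambda>_. 0)"
  obtains j \<gamma>' where "j < n" "\<forall>k<j. \<gamma> k = 0" "\<forall>k<j. \<gamma>' k = 0" "\<gamma> = inc \<gamma>' j" "expvec n \<gamma>'"
    "degn n \<gamma> = degn n \<gamma>' + 1"
proof -
  have ex: "\<exists>k. \<gamma> k \<noteq> 0" using assms(2) by auto
  define j where "j = (LEAST k. \<gamma> k \<noteq> 0)"
  have gj: "\<gamma> j \<noteq> 0" unfolding j_def using ex by (rule LeastI_ex)
  have below: "\<forall>k<j. \<gamma> k = 0" unfolding j_def using not_less_Least by blast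
  have jn: "j < n" using assms(1) gj unfolding expvec_def by (meson not_less)
  define \<gamma>' where "\<gamma>' = \<gamma>(j := \<gamma> j - 1)"
  have eq: "\<gamma> = inc \<gamma>' j" unfolding inc_def \<gamma>'_def using gj by auto
  have "\<forall>k<j. \<gamma>' k = 0" using below unfolding \<gamma>'_def by auto
  moreover have "expvec n \<gamma>'" using assms(1) jn unfolding expvec_def \<gamma>'_def by auto
  moreover have "degn n \<gamma> = degn n \<gamma>' + 1" using eq deg_inc[OF jn] by metis
  ultimately show ?thesis using that jn below eq by blast
qed

definition lexlt :: "(nat \<Rightarrow> nat) \<Rightarrow> (nat \<Rightarrow> nat) \<Rightarrow> bool" where
  "lexlt \<gamma> \<delta> \<longleftrightarrow> (\<exists>i. \<gamma> i < \<delta> i \<and> (\<forall>k<i. \<gamma> k = \<delta> k))"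

lemma lexlt_irrefl: "\<not> lexlt \<gamma> \<gamma>" unfolding lexlt_def by auto

lemma lexlt_trans: assumes "lexlt a b" "lexlt b c" shows "lexlt a c"
proof -
  obtain i where i: "a i < b i" "\<forall>k<i. a k = b k" using assms(1) unfolding lexlt_def by blast
  obtain j where j: "b j < c j" "\<forall>k<j. b k = c k" using assms(2) unfolding lexlt_def by blast
  show ?thesis unfolding lexlt_def
  proof (cases i j rule: linorder_cases)
    case less then show "\<exists>i. a i < c i \<and> (\<forall>k<i. a k = c k)" using i j by (intro exI[of _ i]) auto
  next
    case equal then show "\<exists>i. a i < c i \<and> (\<forall>k<i. a k = c k)" using i j by (intro exI[of _ i]) auto
  next
    case greater then show "\<exists>i. a i < c i \<and> (\<forall>k<i. a k = c k)" using i j by (intro exI[of _ j]) auto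
  qed
qed

lemma lexlt_total: assumes "\<gamma> \<noteq> \<delta>" shows "lexlt \<gamma> \<delta> \<or> lexlt \<delta> \<gamma>"
proof -
  have ex: "\<exists>k. \<gamma> k \<noteq> \<delta> k" using assms by auto
  define j where "j = (LEAST k. \<gamma> k \<noteq> \<delta> k)"
  have gj: "\<gamma> j \<noteq> \<delta> j" unfolding j_def using ex by (rule LeastI_ex)
  have below: "\<forall>k<j. \<gamma> k = \<delta> k" unfolding j_def using not_less_Least by blast
  show ?thesis unfolding lexlt_def
  proof (cases "\<gamma> j < \<delta> j")
    case True then show "(\<exists>i. \<gamma> i < \<delta> i \<and> (\<forall>k<i. \<gamma> k = \<delta> k)) \<or> (\<exists>i. \<delta> i < \<gamma> i \<and> (\<forall>k<i. \<delta> k = \<gamma> k))"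
      using below by blast
  next
    case False then have "\<delta> j < \<gamma> j" using gj by simp
    then show "(\<exists>i. \<gamma> i < \<delta> i \<and> (\<forall>k<i. \<gamma> k = \<delta> k)) \<or> (\<exists>i. \<delta> i < \<gamma> i \<and> (\<forall>k<i. \<delta> k = \<gamma> k))"
      using below by (metis)
  qed
qed

lemma lexlt_vadd: "lexlt \<gamma> \<delta> \<Longrightarrow> lexlt (vadd \<gamma> \<beta>) (vadd \<delta> \<beta>)"
  unfolding lexlt_def vadd_def by auto

lemma lexlt_vadd2: "lexlt \<gamma> \<delta> \<Longrightarrow> lexlt (vadd \<beta> \<gamma>) (vadd \<beta> \<delta>)"
  unfolding lexlt_def vadd_def by auto

definition ordlt :: "nat \<Rightarrow> (nat \<Rightarrow> nat) \<Rightarrow> (nat \<Rightarrow> nat) \<Rightarrow> bool" where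
  "ordlt n \<gamma> \<delta> \<longleftrightarrow> degn n \<gamma> < degn n \<delta> \<or> (degn n \<gamma> = degn n \<delta> \<and> lexlt \<gamma> \<delta>)"

lemma ordlt_irrefl: "\<not> ordlt n \<gamma> \<gamma>" unfolding ordlt_def using lexlt_irrefl by auto

lemma ordlt_trans: "ordlt n a b \<Longrightarrow> ordlt n b c \<Longrightarrow> ordlt n a c"
proof -
  assume h1: "ordlt n a b" and h2: "ordlt n b c"
  have d1: "degn n a \<le> degn n b" and d2: "degn n b \<le> degn n c" using h1 h2 unfolding ordlt_def by auto
  show ?thesis
  proof (cases "degn n a < degn n c")
    case True then show ?thesis unfolding ordlt_def by simp
  next
    case False
    then have "degn n a = degn n b" "degn n b = degn n c" using d1 d2 by auto
    then have "lexlt a b" "lexlt b c" using h1 h2 unfolding ordlt_def by auto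
    then show ?thesis using \<open>degn n a = degn n b\<close> \<open>degn n b = degn n c\<close> lexlt_trans
      unfolding ordlt_def by metis
  qed
qed

lemma ordlt_total: "\<gamma> \<noteq> \<delta> \<Longrightarrow> ordlt n \<gamma> \<delta> \<or> ordlt n \<delta> \<gamma>"
proof -
  assume "\<gamma> \<noteq> \<delta>"
  then have "lexlt \<gamma> \<delta> \<or> lexlt \<delta> \<gamma>" by (rule lexlt_total)
  then show ?thesis unfolding ordlt_def by (cases "degn n \<gamma>" "degn n \<delta>" rule: linorder_cases) auto
qed

lemma ordlt_deg: "ordlt n \<gamma> \<delta> \<Longrightarrow> degn n \<gamma> \<le> degn n \<delta>"
  unfolding ordlt_def by auto

lemma ordlt_vadd: "ordlt n \<gamma> \<delta> \<Longrightarrow> ordlt n (vadd \<gamma> \<beta>) (vadd \<delta> \<beta>)"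
  unfolding ordlt_def deg_vadd using lexlt_vadd by auto

lemma ordlt_vadd2: "ordlt n \<gamma> \<delta> \<Longrightarrow> ordlt n (vadd \<beta> \<gamma>) (vadd \<beta> \<delta>)"
  unfolding ordlt_def deg_vadd using lexlt_vadd2 by auto

lemma ord_max: assumes "finite S" "S \<noteq> {}"
  shows "\<exists>m\<in>S. \<forall>s\<in>S. s \<noteq> m \<longrightarrow> ordlt n s m"
  using assms
proof (induction S rule: finite_ne_induct)
  case (singleton x) then show ?case by auto
next
  case (insert a A)
  then obtain m where m: "m \<in> A" "\<forall>s\<in>A. s \<noteq> m \<longrightarrow> ordlt n s m" by blast
  show ?case
  proof (cases "ordlt n m a")
    case True
    have "\<forall>s\<in>insert a A. s \<noteq> a \<longrightarrow> ordlt n s a"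
    proof (intro ballI impI)
      fix s assume "s \<in> insert a A" "s \<noteq> a"
      then have "s \<in> A" by simp
      show "ordlt n s a"
      proof (cases "s = m")
        case True then show ?thesis using \<open>ordlt n m a\<close> by simp
      next
        case False then show ?thesis using m(2) \<open>s \<in> A\<close> \<open>ordlt n m a\<close> ordlt_trans by blast
      qed
    qed
    then show ?thesis by blast
  next
    case False
    then have "a \<noteq> m \<longrightarrow> ordlt n a m" using ordlt_total by blast
    then have "\<forall>s\<in>insert a A. s \<noteq> m \<longrightarrow> ordlt n s m" using m by blast
    then show ?thesis using m by blast
  qed
qed

lemma sum_single: assumes "finite S" "p \<in> S" "\<And>s. s \<in> S \<Longrightarrow> s \<noteq> p \<Longrightarrow> F s = 0"
  shows "sum F S = F p"
proof -
  have "sum F S = F p + sum F (S - {p})" using sum.remove[OF assms(1,2)] .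
  also have "sum F (S - {p}) = 0" using assms(3) by (intro sum.neutral) auto
  finally show ?thesis by simp
qed



context pbw begin

abbreviation deg where "deg \<equiv> degn n"

definition G :: "nat \<Rightarrow> 'a set" where
  "G k = {v. \<forall>\<gamma>. coef v \<gamma> \<noteq> 0 \<longrightarrow> deg \<gamma> < k}"

lemma G0: "0 \<in> G k" unfolding G_def by (simp add: coef_zero)

lemma Gadd: "v \<in> G k \<Longrightarrow> w \<in> G k \<Longrightarrow> v + w \<in> G k"
proof -
  assume "v \<in> G k" "w \<in> G k"
  then show ?thesis unfolding G_def by (auto simp: coef_add) (metis add.left_neutral)
qed

lemma Gneg: "v \<in> G k \<Longrightarrow> - v \<in> G k"
  unfolding G_def by (simp add: coef_neg)

lemma Gdiff: "v \<in> G k \<Longrightarrow> w \<in> G k \<Longrightarrow> v - w \<in> G k"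
  using Gadd[of v k "- w"] Gneg[of w k] by simp

lemma GR: "r \<in> R \<Longrightarrow> v \<in> G k \<Longrightarrow> r * v \<in> G k"
  unfolding G_def by (auto simp: coef_mult) (metis mult_zero_right)

lemma Gmono: "v \<in> G k \<Longrightarrow> k \<le> k' \<Longrightarrow> v \<in> G k'"
  unfolding G_def by auto

lemma Gsingle: "c \<in> R \<Longrightarrow> expvec n \<gamma> \<Longrightarrow> deg \<gamma> < k \<Longrightarrow> c * mono \<gamma> \<in> G k"
  unfolding G_def using coef_single by (auto split: if_splits)

lemma Gsum: "(\<And>s. s \<in> S \<Longrightarrow> F s \<in> G k) \<Longrightarrow> sum F S \<in> G k"
proof (induction S rule: infinite_finite_induct)
  case (insert a A) then show ?case using Gadd by simp
qed (auto simp: G0)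

lemma Gcoef: "v \<in> G k \<Longrightarrow> k \<le> deg \<gamma> \<Longrightarrow> coef v \<gamma> = 0"
  unfolding G_def by force

definition Q :: "(nat \<Rightarrow> nat) \<Rightarrow> nat \<Rightarrow> bool" where
  "Q \<gamma> i \<longleftrightarrow> (\<exists>u. unit_in R u \<and> x i * mono \<gamma> - u * mono (inc \<gamma> i) \<in> G (deg \<gamma> + 1))"

lemma closure_from:
  assumes IH: "\<forall>\<gamma>. expvec n \<gamma> \<longrightarrow> deg \<gamma> < D \<longrightarrow> (\<forall>i<n. Q \<gamma> i)"
    and v: "v \<in> G D" and j: "j < n"
  shows "x j * v \<in> G (D + 1)"
proof -
  have "x j * v = x j * (\<Sum>\<gamma>\<in>supp (coef v). coef v \<gamma> * mono \<gamma>)"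
    using coef_rep[of v] by (rule arg_cong)
  also have "\<dots> = (\<Sum>\<gamma>\<in>supp (coef v). \<sigma> j (coef v \<gamma>) * (x j * mono \<gamma>) + \<delta> j (coef v \<gamma>) * mono \<gamma>)"
    by (simp add: sum_distrib_left mult.assoc[symmetric] comm[OF j coef_R] distrib_right)
  finally have eq: "x j * v = \<dots>" .
  show ?thesis unfolding eq
  proof (rule Gsum, rule Gadd)
    fix \<gamma> assume "\<gamma> \<in> supp (coef v)"
    then have nz: "coef v \<gamma> \<noteq> 0" unfolding supp_def by simp
    then have ex: "expvec n \<gamma>" and dg: "deg \<gamma> < D" using coef_exp v unfolding G_def by auto
    obtain u where u: "unit_in R u" "x j * mono \<gamma> - u * mono (inc \<gamma> j) \<in> G (deg \<gamma> + 1)"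
      using IH ex dg j unfolding Q_def by blast
    have a: "x j * mono \<gamma> - u * mono (inc \<gamma> j) \<in> G (D + 1)" using Gmono[OF u(2)] dg by simp
    have b: "u * mono (inc \<gamma> j) \<in> G (D + 1)"
      using Gsingle[OF unitR[OF u(1)] expvec_inc[OF ex j]] deg_inc[OF j] dg by simp
    have "x j * mono \<gamma> \<in> G (D + 1)" using Gadd[OF a b] by simp
    then show "\<sigma> j (coef v \<gamma>) * (x j * mono \<gamma>) \<in> G (D + 1)" using GR sigR[OF j coef_R] by blast
    show "\<delta> j (coef v \<gamma>) * mono \<gamma> \<in> G (D + 1)" using Gsingle[OF delR[OF j coef_R] ex] dg by simp
  qed
qed

lemma mono_in_G: "expvec n \<gamma> \<Longrightarrow> deg \<gamma> < k \<Longrightarrow> mono \<gamma> \<in> G k"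
  using Gsingle[OF R1] by fastforce

lemma xx_rel: assumes "j < i" "i < n"
  obtains d r0 r where "unit_in R d" "r0 \<in> R" "\<forall>k<n. r k \<in> R"
    "x i * x j = d * (x j * x i) + (r0 + (\<Sum>k<n. r k * x k))"
proof -
  have "\<forall>i j. i < j \<and> j < n \<longrightarrow> (\<exists>d. unit_in R d \<and> x j * x i - d * (x i * x j) \<in> lin_span1 R x n)"
    using bij unfolding bijective_skew_PBW_def by (elim conjE)
  then obtain d where d: "unit_in R d" "x i * x j - d * (x j * x i) \<in> lin_span1 R x n"
    using assms by blast
  then obtain r0 r where r: "r0 \<in> R" "\<forall>k<n. r k \<in> R" "x i * x j - d * (x j * x i) = r0 + (\<Sum>k<n. r k * x k)"
    unfolding lin_span1_def by blast
  have "x i * x j = d * (x j * x i) + (r0 + (\<Sum>k<n. r k * x k))" using r(3) by (simp add: algebra_simps)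
  then show ?thesis using that d r by blast
qed

lemma Q_all: assumes "expvec n \<gamma>" "i < n" shows "Q \<gamma> i"
proof -
  have "\<forall>\<gamma>. expvec n \<gamma> \<and> deg \<gamma> = d \<longrightarrow> (\<forall>i<n. Q \<gamma> i)" for d
  proof (induction d rule: less_induct)
    case (less d)
    then have IH: "\<forall>\<gamma>. expvec n \<gamma> \<longrightarrow> deg \<gamma> < d \<longrightarrow> (\<forall>i<n. Q \<gamma> i)" by blast
    show ?case
    proof (intro allI impI, elim conjE)
      fix \<gamma> i assume ex: "expvec n \<gamma>" and dg: "deg \<gamma> = d" and i: "i < n"
      show "Q \<gamma> i"
      proof (cases "\<forall>k<i. \<gamma> k = 0")
        case True
        then have "x i * mono \<gamma> - 1 * mono (inc \<gamma> i) = 0" using mono_inc[OF i True, of x] by simp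
        then show ?thesis unfolding Q_def using unit_one G0 by metis
      next
        case False
        then obtain k0 where k0: "k0 < i" "\<gamma> k0 \<noteq> 0" by blast
        then have "\<gamma> \<noteq> (\<lambda>_. 0)" by auto
        then obtain j \<gamma>' where j: "j < n" "\<forall>k<j. \<gamma> k = 0" "\<forall>k<j. \<gamma>' k = 0" "\<gamma> = inc \<gamma>' j"
          "expvec n \<gamma>'" "deg \<gamma> = deg \<gamma>' + 1"
          using first_nz[OF ex] by metis
        have ji: "j < i" using j(2) k0 by (meson not_less order.strict_trans1)
        obtain dd r0 r where rel: "unit_in R dd" "r0 \<in> R" "\<forall>k<n. r k \<in> R"
          "x i * x j = dd * (x j * x i) + (r0 + (\<Sum>k<n. r k * x k))"
          using xx_rel[OF ji i] by blast
        have dg': "deg \<gamma>' < d" using j(6) dg by simp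
        have dg'': "deg \<gamma>' + 1 = d" using j(6) dg by simp
        obtain u' where u': "unit_in R u'" "x i * mono \<gamma>' - u' * mono (inc \<gamma>' i) \<in> G (deg \<gamma>' + 1)"
          using IH j(5) dg' i unfolding Q_def by blast
        define g' where "g' = x i * mono \<gamma>' - u' * mono (inc \<gamma>' i)"
        have g'G: "g' \<in> G d" using u'(2) dg'' unfolding g'_def by simp
        have xg: "x j * g' \<in> G (d + 1)" by (rule closure_from[OF IH g'G j(1)])
        have mG: "mono \<gamma>' \<in> G d" using mono_in_G[OF j(5) dg'] .
        have xk: "x k * mono \<gamma>' \<in> G (d + 1)" if "k < n" for k by (rule closure_from[OF IH mG that])
        define L where "L = (r0 + (\<Sum>k<n. r k * x k)) * mono \<gamma>'"
        have LG: "L \<in> G (d + 1)"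
        proof -
          have "L = r0 * mono \<gamma>' + (\<Sum>k<n. r k * (x k * mono \<gamma>'))"
            unfolding L_def by (simp add: distrib_right sum_distrib_right mult.assoc)
          moreover have "r0 * mono \<gamma>' \<in> G (d + 1)" using Gsingle[OF rel(2) j(5)] dg' by simp
          moreover have "(\<Sum>k<n. r k * (x k * mono \<gamma>')) \<in> G (d + 1)"
            using rel(3) xk GR by (intro Gsum) auto
          ultimately show ?thesis using Gadd by simp
        qed
        have z: "\<forall>k<j. inc \<gamma>' i k = 0" using j(3) ji unfolding inc_def by auto
        have xm: "x j * mono (inc \<gamma>' i) = mono (inc \<gamma> i)"
          using mono_inc[OF j(1) z, of x] j(4) inc_inc by metis
        have u'R: "u' \<in> R" using unitR[OF u'(1)] .
        have exi: "expvec n (inc \<gamma>' i)" using expvec_inc[OF j(5) i] .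
        have dgi: "deg (inc \<gamma>' i) < d + 1" using deg_inc[OF i, of \<gamma>'] dg'' by simp
        define B where "B = dd * (\<delta> j u' * mono (inc \<gamma>' i)) + dd * (x j * g') + L"
        have BG: "B \<in> G (d + 1)"
          unfolding B_def
          by (intro Gadd GR unitR[OF rel(1)] xg LG Gsingle[OF delR[OF j(1) u'R] exi dgi])
        have "x i * mono \<gamma> = x i * (x j * mono \<gamma>')"
          using mono_inc[OF j(1) j(3), of x] j(4) by simp
        also have "\<dots> = (x i * x j) * mono \<gamma>'" by (simp add: mult.assoc)
        also have "\<dots> = dd * (x j * (x i * mono \<gamma>')) + L"
          unfolding L_def rel(4) by (simp add: distrib_right mult.assoc)
        also have "x i * mono \<gamma>' = u' * mono (inc \<gamma>' i) + g'" unfolding g'_def by simp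
        also have "x j * (u' * mono (inc \<gamma>' i) + g') = (x j * u') * mono (inc \<gamma>' i) + x j * g'"
          by (simp add: distrib_left mult.assoc)
        also have "x j * u' = \<sigma> j u' * x j + \<delta> j u'" by (rule comm[OF j(1) u'R])
        finally have "x i * mono \<gamma> = (dd * \<sigma> j u') * (x j * mono (inc \<gamma>' i)) + B"
          unfolding B_def by (simp add: algebra_simps)
        then have "x i * mono \<gamma> - (dd * \<sigma> j u') * mono (inc \<gamma> i) = B" using xm by simp
        moreover have "unit_in R (dd * \<sigma> j u')" using unit_mult[OF rel(1) unit_sig[OF j(1) u'(1)]] .
        ultimately show ?thesis unfolding Q_def using BG dg by metis
      qed
    qed
  qed
  then show ?thesis using assms by blast
qed

lemma xG: assumes "v \<in> G D" "j < n" shows "x j * v \<in> G (D + 1)"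
  using closure_from[OF _ assms] Q_all by blast

lemma Q_expl: assumes "expvec n \<gamma>" "i < n"
  obtains u where "unit_in R u" "x i * mono \<gamma> - u * mono (inc \<gamma> i) \<in> G (deg \<gamma> + 1)"
  using Q_all[OF assms] unfolding Q_def by blast

end


context pbw begin

lemma E_lemma:
  assumes "expvec n \<alpha>" "expvec n \<beta>" "s \<in> R"
  shows "\<exists>w\<in>R. (\<forall>a\<in>R. a * w = 0 \<longrightarrow> a * s = 0) \<and>
           mono \<alpha> * s * mono \<beta> - w * mono (vadd \<alpha> \<beta>) \<in> G (deg \<alpha> + deg \<beta>)"
proof -
  have "\<forall>\<alpha>. expvec n \<alpha> \<and> deg \<alpha> = d \<longrightarrow> (\<exists>w\<in>R. (\<forall>a\<in>R. a * w = 0 \<longrightarrow> a * s = 0) \<and>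
           mono \<alpha> * s * mono \<beta> - w * mono (vadd \<alpha> \<beta>) \<in> G (deg \<alpha> + deg \<beta>))" for d
  proof (induction d rule: less_induct)
    case (less d)
    show ?case
    proof (intro allI impI, elim conjE)
      fix \<alpha> assume ex: "expvec n \<alpha>" and dg: "deg \<alpha> = d"
      show "\<exists>w\<in>R. (\<forall>a\<in>R. a * w = 0 \<longrightarrow> a * s = 0) \<and>
           mono \<alpha> * s * mono \<beta> - w * mono (vadd \<alpha> \<beta>) \<in> G (deg \<alpha> + deg \<beta>)"
      proof (cases "\<alpha> = (\<lambda>_. 0)")
        case True
        have "mono \<alpha> * s * mono \<beta> - s * mono (vadd \<alpha> \<beta>) = 0"
          using True mono_zero[of x n] vadd_zero by simp
        then show ?thesis using assms(3) G0 by metis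
      next
        case False
        obtain j \<alpha>' where j: "j < n" "\<forall>k<j. \<alpha> k = 0" "\<forall>k<j. \<alpha>' k = 0" "\<alpha> = inc \<alpha>' j"
          "expvec n \<alpha>'" "deg \<alpha> = deg \<alpha>' + 1"
          using first_nz[OF ex False] by metis
        have "deg \<alpha>' < d" using j(6) dg by simp
        then obtain w' where w': "w' \<in> R" "\<forall>a\<in>R. a * w' = 0 \<longrightarrow> a * s = 0"
          "mono \<alpha>' * s * mono \<beta> - w' * mono (vadd \<alpha>' \<beta>) \<in> G (deg \<alpha>' + deg \<beta>)"
          using less.IH j(5) by blast
        define g' where "g' = mono \<alpha>' * s * mono \<beta> - w' * mono (vadd \<alpha>' \<beta>)"
        have exv: "expvec n (vadd \<alpha>' \<beta>)" using expvec_vadd[OF j(5) assms(2)] .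
        obtain u where u: "unit_in R u" "x j * mono (vadd \<alpha>' \<beta>) - u * mono (inc (vadd \<alpha>' \<beta>) j) \<in> G (deg (vadd \<alpha>' \<beta>) + 1)"
          using Q_expl[OF exv j(1)] by blast
        define g'' where "g'' = x j * mono (vadd \<alpha>' \<beta>) - u * mono (vadd \<alpha> \<beta>)"
        have iv: "inc (vadd \<alpha>' \<beta>) j = vadd \<alpha> \<beta>" using inc_vadd j(4) by metis
        have dsum: "deg \<alpha> + deg \<beta> = deg \<alpha>' + deg \<beta> + 1" using j(6) by simp
        have g''G: "g'' \<in> G (deg \<alpha> + deg \<beta>)" using u(2) iv deg_vadd dsum unfolding g''_def by metis
        have g'G: "x j * g' \<in> G (deg \<alpha> + deg \<beta>)" using xG[OF w'(3)[folded g'_def] j(1)] dsum by simp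
        have dG: "\<delta> j w' * mono (vadd \<alpha>' \<beta>) \<in> G (deg \<alpha> + deg \<beta>)"
          using Gsingle[OF delR[OF j(1) w'(1)] exv] deg_vadd dsum by simp
        define B where "B = \<sigma> j w' * g'' + \<delta> j w' * mono (vadd \<alpha>' \<beta>) + x j * g'"
        have BG: "B \<in> G (deg \<alpha> + deg \<beta>)" unfolding B_def
          by (intro Gadd GR sigR[OF j(1) w'(1)] g''G dG g'G)
        have "mono \<alpha> * s * mono \<beta> = x j * (mono \<alpha>' * s * mono \<beta>)"
        proof -
          have "mono \<alpha> = x j * mono \<alpha>'" using mono_inc[OF j(1) j(3), of x] j(4) by simp
          then show ?thesis by (simp add: mult.assoc)
        qed
        also have "mono \<alpha>' * s * mono \<beta> = w' * mono (vadd \<alpha>' \<beta>) + g'" unfolding g'_def by simp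
        also have "x j * (w' * mono (vadd \<alpha>' \<beta>) + g') = (x j * w') * mono (vadd \<alpha>' \<beta>) + x j * g'"
          by (simp add: distrib_left mult.assoc)
        also have "x j * w' = \<sigma> j w' * x j + \<delta> j w'" by (rule comm[OF j(1) w'(1)])
        also have "(\<sigma> j w' * x j + \<delta> j w') * mono (vadd \<alpha>' \<beta>) =
            \<sigma> j w' * (x j * mono (vadd \<alpha>' \<beta>)) + \<delta> j w' * mono (vadd \<alpha>' \<beta>)"
          by (simp add: distrib_right mult.assoc)
        also have "x j * mono (vadd \<alpha>' \<beta>) = u * mono (vadd \<alpha> \<beta>) + g''" unfolding g''_def by simp
        finally have "mono \<alpha> * s * mono \<beta> = (\<sigma> j w' * u) * mono (vadd \<alpha> \<beta>) + B"
          unfolding B_def by (simp add: algebra_simps)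
        then have eq: "mono \<alpha> * s * mono \<beta> - (\<sigma> j w' * u) * mono (vadd \<alpha> \<beta>) = B" by simp
        have wR: "\<sigma> j w' * u \<in> R" using Rmult sigR[OF j(1) w'(1)] unitR[OF u(1)] by blast
        have pr: "\<forall>a\<in>R. a * (\<sigma> j w' * u) = 0 \<longrightarrow> a * s = 0"
        proof (intro ballI impI)
          fix a assume a: "a \<in> R" "a * (\<sigma> j w' * u) = 0"
          then have "(a * \<sigma> j w') * u = 0" by (simp add: mult.assoc)
          then have "a * \<sigma> j w' = 0" using unit_cancel[OF u(1)] by blast
          then have "a * w' = 0" using csig[OF j(1) a(1) w'(1)] by simp
          then show "a * s = 0" using w'(2) a(1) by blast
        qed
        show ?thesis using wR pr eq BG by metis
      qed
    qed
  qed
  then show ?thesis using assms(1) by blast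
qed

lemma supp_nonempty: "f \<noteq> 0 \<Longrightarrow> supp (coef f) \<noteq> {}"
  using coef_eq0[of f] unfolding supp_def by auto

lemma LL:
  assumes "f \<noteq> 0" "h \<noteq> 0" "\<forall>r\<in>R. f * r * h = 0"
  shows "\<exists>\<alpha> \<beta>. coef f \<alpha> \<noteq> 0 \<and> coef h \<beta> \<noteq> 0 \<and> (\<forall>r\<in>R. coef f \<alpha> * r * coef h \<beta> = 0)"
proof -
  let ?Sf = "supp (coef f)" and ?Sh = "supp (coef h)"
  obtain p where p: "p \<in> ?Sf" "\<forall>s\<in>?Sf. s \<noteq> p \<longrightarrow> ordlt n s p"
    using ord_max[OF coef_fin supp_nonempty[OF assms(1)]] by blast
  obtain q where q: "q \<in> ?Sh" "\<forall>s\<in>?Sh. s \<noteq> q \<longrightarrow> ordlt n s q"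
    using ord_max[OF coef_fin supp_nonempty[OF assms(2)]] by blast
  have pe: "expvec n p" and qe: "expvec n q" using p(1) q(1) coef_exp unfolding supp_def by auto
  have pnz: "coef f p \<noteq> 0" and qnz: "coef h q \<noteq> 0" using p(1) q(1) unfolding supp_def by auto
  let ?top = "vadd p q"
  have "\<forall>r\<in>R. coef f p * r * coef h q = 0"
  proof
    fix r assume r: "r \<in> R"
    define T where "T \<alpha> \<beta> = coef f \<alpha> * (mono \<alpha> * (r * coef h \<beta>) * mono \<beta>)" for \<alpha> \<beta>
    have rh: "r * h = (\<Sum>\<beta>\<in>?Sh. (r * coef h \<beta>) * mono \<beta>)"
    proof -
      have "r * h = r * (\<Sum>\<beta>\<in>?Sh. coef h \<beta> * mono \<beta>)" using coef_rep[of h] by (rule arg_cong)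
      then show ?thesis by (simp add: sum_distrib_left mult.assoc)
    qed
    have "f * r * h = (\<Sum>\<alpha>\<in>?Sf. coef f \<alpha> * (mono \<alpha> * (r * h)))"
      using mult_rep[of f "r * h"] by (simp add: mult.assoc)
    also have "\<dots> = (\<Sum>\<alpha>\<in>?Sf. \<Sum>\<beta>\<in>?Sh. T \<alpha> \<beta>)"
      unfolding rh T_def by (simp add: sum_distrib_left mult.assoc)
    finally have frh: "f * r * h = (\<Sum>\<alpha>\<in>?Sf. \<Sum>\<beta>\<in>?Sh. T \<alpha> \<beta>)" .
    have Tcoef: "coef (T \<alpha> \<beta>) ?top = (if (\<alpha>, \<beta>) = (p, q) then coef f p * w else 0)"
      if "\<alpha> \<in> ?Sf" "\<beta> \<in> ?Sh" "w \<in> R"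
        "mono \<alpha> * (r * coef h \<beta>) * mono \<beta> - w * mono (vadd \<alpha> \<beta>) \<in> G (deg \<alpha> + deg \<beta>)" for \<alpha> \<beta> w
    proof -
      define g where "g = mono \<alpha> * (r * coef h \<beta>) * mono \<beta> - w * mono (vadd \<alpha> \<beta>)"
      have ea: "expvec n \<alpha>" and eb: "expvec n \<beta>" using that(1,2) coef_exp unfolding supp_def by auto
      have dle: "deg \<alpha> + deg \<beta> \<le> deg ?top \<and> (vadd \<alpha> \<beta> \<noteq> ?top \<longleftrightarrow> (\<alpha>, \<beta>) \<noteq> (p, q))"
      proof (cases "(\<alpha>, \<beta>) = (p, q)")
        case True then show ?thesis using deg_vadd by simp
      next
        case False
        have lt: "ordlt n (vadd \<alpha> \<beta>) ?top"
        proof (cases "\<alpha> = p")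
          case True
          then have "\<beta> \<noteq> q" using False by simp
          then have "ordlt n \<beta> q" using q(2) that(2) by blast
          then show ?thesis using ordlt_vadd2 True by blast
        next
          case False
          then have a1: "ordlt n (vadd \<alpha> \<beta>) (vadd p \<beta>)" using p(2) that(1) ordlt_vadd by blast
          show ?thesis
          proof (cases "\<beta> = q")
            case True then show ?thesis using a1 by simp
          next
            case False
            then have "ordlt n (vadd p \<beta>) (vadd p q)" using q(2) that(2) ordlt_vadd2 by blast
            then show ?thesis using a1 ordlt_trans by blast
          qed
        qed
        then have "vadd \<alpha> \<beta> \<noteq> ?top" using ordlt_irrefl by metis
        then show ?thesis using ordlt_deg[OF lt] deg_vadd False by metis
      qed
      have cg: "coef g ?top = 0"
        by (rule Gcoef[of g "deg \<alpha> + deg \<beta>"]) (use that(4) dle in \<open>auto simp: g_def\<close>)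
      have "T \<alpha> \<beta> = coef f \<alpha> * (w * mono (vadd \<alpha> \<beta>) + g)" unfolding T_def g_def by simp
      then have "coef (T \<alpha> \<beta>) ?top = coef f \<alpha> * (coef (w * mono (vadd \<alpha> \<beta>)) ?top + coef g ?top)"
        by (simp add: coef_mult[OF coef_R] coef_add)
      also have "\<dots> = coef f \<alpha> * (if vadd \<alpha> \<beta> = ?top then w else 0)"
        using coef_single[OF that(3) expvec_vadd[OF ea eb]] cg by simp
      finally show ?thesis using dle by auto
    qed
    obtain w where w: "w \<in> R" "\<forall>a\<in>R. a * w = 0 \<longrightarrow> a * (r * coef h q) = 0"
      "mono p * (r * coef h q) * mono q - w * mono (vadd p q) \<in> G (deg p + deg q)"
      using E_lemma[OF pe qe Rmult[OF r coef_R]] by blast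
    have allT: "coef (T \<alpha> \<beta>) ?top = (if (\<alpha>, \<beta>) = (p, q) then coef f p * w else 0)"
      if "\<alpha> \<in> ?Sf" "\<beta> \<in> ?Sh" for \<alpha> \<beta>
    proof -
      have ea: "expvec n \<alpha>" and eb: "expvec n \<beta>" using that coef_exp unfolding supp_def by auto
      obtain w' where w': "w' \<in> R"
        "mono \<alpha> * (r * coef h \<beta>) * mono \<beta> - w' * mono (vadd \<alpha> \<beta>) \<in> G (deg \<alpha> + deg \<beta>)"
        using E_lemma[OF ea eb Rmult[OF r coef_R]] by blast
      show ?thesis
      proof (cases "(\<alpha>, \<beta>) = (p, q)")
        case True
        then have "\<alpha> = p" "\<beta> = q" by auto
        then show ?thesis using Tcoef[OF p(1) q(1) w(1) w(3)] by simp
      next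
        case False
        then have "coef (T \<alpha> \<beta>) ?top = 0" using Tcoef[OF that w'] by auto
        then show ?thesis using False by auto
      qed
    qed
    have "coef (f * r * h) ?top = (\<Sum>\<alpha>\<in>?Sf. \<Sum>\<beta>\<in>?Sh. coef (T \<alpha> \<beta>) ?top)"
      unfolding frh by (simp add: coef_sum)
    also have "\<dots> = (\<Sum>\<alpha>\<in>?Sf. \<Sum>\<beta>\<in>?Sh. (if (\<alpha>, \<beta>) = (p, q) then coef f p * w else 0))"
      using allT by simp
    also have "\<dots> = coef f p * w"
    proof -
      have "(\<Sum>\<beta>\<in>?Sh. (if (\<alpha>, \<beta>) = (p, q) then coef f p * w else 0)) = (if \<alpha> = p then coef f p * w else 0)" for \<alpha>
        using q(1) coef_fin[of h] by (cases "\<alpha> = p") (auto intro: sum_single)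
      then show ?thesis using p(1) coef_fin[of f] by (simp add: sum_single)
    qed
    finally have "coef f p * w = 0" using assms(3) r coef_zero by simp
    then have "coef f p * (r * coef h q) = 0" using w(2) coef_R by blast
    then show "coef f p * r * coef h q = 0" by (simp add: mult.assoc)
  qed
  then show ?thesis using pnz qnz by blast
qed

end


context pbw begin

lemma card_less: assumes "A \<subseteq> B - {b}" "b \<in> B" "finite B" shows "card A < card B"
proof -
  have "A \<subset> B" using assms(1,2) by blast
  then show ?thesis using assms(3) psubset_card_mono by blast
qed

lemma card_le: assumes "A \<subseteq> B" "finite B" shows "card A \<le> card B"
  using card_mono assms by blast

lemma arm_right:
  assumes baer: "right_pq_Baer R"
  shows "(\<forall>t. f * t * h = 0) \<Longrightarrow> \<forall>\<alpha> \<beta>. \<forall>r\<in>R. coef f \<alpha> * r * coef h \<beta> = 0"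
proof (induction "card (supp (coef f)) + card (supp (coef h))" arbitrary: f h rule: less_induct)
  case less
  show ?case
  proof (cases "f = 0 \<or> h = 0")
    case True then show ?thesis by (auto simp: coef_zero)
  next
    case False
    then have "f \<noteq> 0" "h \<noteq> 0" by auto
    have "\<forall>r\<in>R. f * r * h = 0" using less.prems by blast
    then obtain \<alpha>0 \<beta>0 where ab: "coef f \<alpha>0 \<noteq> 0" "coef h \<beta>0 \<noteq> 0"
      "\<forall>r\<in>R. coef f \<alpha>0 * r * coef h \<beta>0 = 0"
      using LL[OF \<open>f \<noteq> 0\<close> \<open>h \<noteq> 0\<close>] by blast
    let ?a = "coef f \<alpha>0" and ?b = "coef h \<beta>0"
    obtain e where e: "e \<in> R" "e * e = e" "r_ann R ((\<lambda>t. ?a * t) ` R) = (\<lambda>t. e * t) ` R"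
      using baer coef_R unfolding right_pq_Baer_def by blast
    have mem: "z \<in> r_ann R ((\<lambda>t. ?a * t) ` R) \<longleftrightarrow> z \<in> R \<and> (\<forall>t\<in>R. ?a * t * z = 0)" for z
      unfolding r_ann_def by auto
    have eann: "\<forall>t\<in>R. ?a * t * e = 0"
    proof -
      have "e = e * 1" by simp
      then have "e \<in> (\<lambda>t. e * t) ` R" using R1 by blast
      then show ?thesis using e(3) mem by blast
    qed
    have ae: "?a * e = 0" using eann R1 by (metis mult.right_neutral)
    have semi: "\<forall>r\<in>R. r * e = e * r * e"
    proof
      fix r assume r: "r \<in> R"
      have "r * e \<in> r_ann R ((\<lambda>t. ?a * t) ` R)"
        unfolding mem using r e(1) Rmult eann by (auto simp: mult.assoc[symmetric]) (metis Rmult mult.assoc)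
      then obtain t' where "r * e = e * t'" using e(3) by auto
      then show "r * e = e * r * e" using e(2) by (metis mult.assoc)
    qed
    have "?b \<in> r_ann R ((\<lambda>t. ?a * t) ` R)" unfolding mem using ab(3) coef_R by blast
    then obtain t' where "?b = e * t'" using e(3) by auto
    then have eb: "e * ?b = ?b" using e(2) by (metis mult.assoc)
    have c1: "coef (f * e) = (\<lambda>\<alpha>. coef f \<alpha> * e)" using coef_mult_idem[OF e(1,2)] .
    have c2: "coef (e * h) = (\<lambda>\<beta>. e * coef h \<beta>)" using coef_mult[OF e(1)] .
    have s1: "supp (coef (f * e)) \<subseteq> supp (coef f) - {\<alpha>0}"
      unfolding c1 supp_def using ae by auto
    have s2: "supp (coef (e * h)) \<subseteq> supp (coef h)" unfolding c2 supp_def by auto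
    have lt1: "card (supp (coef (f * e))) + card (supp (coef (e * h))) < card (supp (coef f)) + card (supp (coef h))"
      using card_less[OF s1 _ coef_fin] card_le[OF s2 coef_fin] ab(1) supp_I by fastforce
    have z1: "\<forall>t. f * e * t * (e * h) = 0"
    proof
      fix t
      have "f * e * t * (e * h) = f * (e * t * e) * h" by (simp add: mult.assoc)
      also have "\<dots> = f * (t * e) * h" using left_semi_A[OF e(1,2) semi] by simp
      also have "\<dots> = 0" using less.prems by blast
      finally show "f * e * t * (e * h) = 0" .
    qed
    have IH1: "\<forall>\<alpha> \<beta>. \<forall>r\<in>R. coef f \<alpha> * e * r * (e * coef h \<beta>) = 0"
      using less.hyps[OF lt1 z1] unfolding c1 c2 by simp
    have c3: "coef (h - e * h) = (\<lambda>\<beta>. coef h \<beta> - e * coef h \<beta>)" using coef_diff c2 by simp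
    have s3: "supp (coef (h - e * h)) \<subseteq> supp (coef h) - {\<beta>0}"
      unfolding c3 supp_def using eb by auto
    have lt2: "card (supp (coef f)) + card (supp (coef (h - e * h))) < card (supp (coef f)) + card (supp (coef h))"
      using card_less[OF s3 _ coef_fin] ab(2) supp_I by fastforce
    have z2: "\<forall>t. f * t * (h - e * h) = 0"
    proof
      fix t
      have "f * t * (h - e * h) = f * t * h - f * (t * e) * h" by (simp add: algebra_simps)
      then show "f * t * (h - e * h) = 0" using less.prems by simp
    qed
    have IH2: "\<forall>\<alpha> \<beta>. \<forall>r\<in>R. coef f \<alpha> * r * (coef h \<beta> - e * coef h \<beta>) = 0"
      using less.hyps[OF lt2 z2] unfolding c3 by simp
    show ?thesis
    proof (intro allI ballI)
      fix \<alpha> \<beta> r assume r: "r \<in> R"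
      have "coef f \<alpha> * r * coef h \<beta> = coef f \<alpha> * r * (coef h \<beta> - e * coef h \<beta>) + coef f \<alpha> * (r * e) * coef h \<beta>"
        by (simp add: algebra_simps)
      also have "coef f \<alpha> * (r * e) * coef h \<beta> = coef f \<alpha> * e * r * (e * coef h \<beta>)"
      proof -
        have "r * e = e * r * e" using semi r by blast
        then have "coef f \<alpha> * (r * e) * coef h \<beta> = coef f \<alpha> * (e * r * e) * coef h \<beta>" by simp
        then show ?thesis by (simp add: mult.assoc)
      qed
      finally show "coef f \<alpha> * r * coef h \<beta> = 0" using IH1 IH2 r by simp
    qed
  qed
qed

lemma arm_left:
  assumes baer: "left_pq_Baer R"
  shows "(\<forall>t. f * t * h = 0) \<Longrightarrow> \<forall>\<alpha> \<beta>. \<forall>r\<in>R. coef f \<alpha> * r * coef h \<beta> = 0"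
proof (induction "card (supp (coef f)) + card (supp (coef h))" arbitrary: f h rule: less_induct)
  case less
  show ?case
  proof (cases "f = 0 \<or> h = 0")
    case True then show ?thesis by (auto simp: coef_zero)
  next
    case False
    then have "f \<noteq> 0" "h \<noteq> 0" by auto
    have "\<forall>r\<in>R. f * r * h = 0" using less.prems by blast
    then obtain \<alpha>0 \<beta>0 where ab: "coef f \<alpha>0 \<noteq> 0" "coef h \<beta>0 \<noteq> 0"
      "\<forall>r\<in>R. coef f \<alpha>0 * r * coef h \<beta>0 = 0"
      using LL[OF \<open>f \<noteq> 0\<close> \<open>h \<noteq> 0\<close>] by blast
    let ?a = "coef f \<alpha>0" and ?b = "coef h \<beta>0"
    obtain e where e: "e \<in> R" "e * e = e" "l_ann R ((\<lambda>t. t * ?b) ` R) = (\<lambda>t. t * e) ` R"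
      using baer coef_R unfolding left_pq_Baer_def by blast
    have mem: "z \<in> l_ann R ((\<lambda>t. t * ?b) ` R) \<longleftrightarrow> z \<in> R \<and> (\<forall>t\<in>R. z * t * ?b = 0)" for z
      unfolding l_ann_def by (auto simp: mult.assoc)
    have eann: "\<forall>t\<in>R. e * t * ?b = 0"
    proof -
      have "e = 1 * e" by simp
      then have "e \<in> (\<lambda>t. t * e) ` R" using R1 by blast
      then show ?thesis using e(3) mem by blast
    qed
    have eb: "e * ?b = 0" using eann R1 by (metis mult.right_neutral)
    have semi: "\<forall>r\<in>R. e * r = e * r * e"
    proof
      fix r assume r: "r \<in> R"
      have "e * r \<in> l_ann R ((\<lambda>t. t * ?b) ` R)"
        unfolding mem using r e(1) Rmult eann by (auto simp: mult.assoc) (metis Rmult mult.assoc)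
      then obtain t' where "e * r = t' * e" using e(3) by auto
      then show "e * r = e * r * e" using e(2) by (metis mult.assoc)
    qed
    have "?a \<in> l_ann R ((\<lambda>t. t * ?b) ` R)" unfolding mem using ab(3) coef_R by blast
    then obtain t' where "?a = t' * e" using e(3) by auto
    then have ae: "?a * e = ?a" using e(2) by (metis mult.assoc)
    have c1: "coef (f * e) = (\<lambda>\<alpha>. coef f \<alpha> * e)" using coef_mult_idem[OF e(1,2)] .
    have c2: "coef (e * h) = (\<lambda>\<beta>. e * coef h \<beta>)" using coef_mult[OF e(1)] .
    have c3: "coef (f - f * e) = (\<lambda>\<alpha>. coef f \<alpha> - coef f \<alpha> * e)" using coef_diff c1 by simp
    have s3: "supp (coef (f - f * e)) \<subseteq> supp (coef f) - {\<alpha>0}"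
      unfolding c3 supp_def using ae by auto
    have lt1: "card (supp (coef (f - f * e))) + card (supp (coef h)) < card (supp (coef f)) + card (supp (coef h))"
      using card_less[OF s3 _ coef_fin] ab(1) supp_I by fastforce
    have z1: "\<forall>t. (f - f * e) * t * h = 0"
    proof
      fix t
      have "(f - f * e) * t * h = f * t * h - f * (e * t) * h" by (simp add: algebra_simps)
      then show "(f - f * e) * t * h = 0" using less.prems by simp
    qed
    have IH1: "\<forall>\<alpha> \<beta>. \<forall>r\<in>R. (coef f \<alpha> - coef f \<alpha> * e) * r * coef h \<beta> = 0"
      using less.hyps[OF lt1 z1] unfolding c3 by simp
    have s1: "supp (coef (f * e)) \<subseteq> supp (coef f)" unfolding c1 supp_def by auto
    have s2: "supp (coef (e * h)) \<subseteq> supp (coef h) - {\<beta>0}" unfolding c2 supp_def using eb by auto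
    have lt2: "card (supp (coef (f * e))) + card (supp (coef (e * h))) < card (supp (coef f)) + card (supp (coef h))"
      using card_less[OF s2 _ coef_fin] card_le[OF s1 coef_fin] ab(2) supp_I by fastforce
    have z2: "\<forall>t. f * e * t * (e * h) = 0"
    proof
      fix t
      have "f * e * t * (e * h) = f * (e * t * e) * h" by (simp add: mult.assoc)
      also have "\<dots> = f * (e * t) * h" using right_semi_A[OF e(1,2) semi] by simp
      also have "\<dots> = 0" using less.prems by blast
      finally show "f * e * t * (e * h) = 0" .
    qed
    have IH2: "\<forall>\<alpha> \<beta>. \<forall>r\<in>R. coef f \<alpha> * e * r * (e * coef h \<beta>) = 0"
      using less.hyps[OF lt2 z2] unfolding c1 c2 by simp
    show ?thesis
    proof (intro allI ballI)
      fix \<alpha> \<beta> r assume r: "r \<in> R"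
      have "coef f \<alpha> * r * coef h \<beta> = (coef f \<alpha> - coef f \<alpha> * e) * r * coef h \<beta> + coef f \<alpha> * (e * r) * coef h \<beta>"
        by (simp add: algebra_simps)
      also have "coef f \<alpha> * (e * r) * coef h \<beta> = coef f \<alpha> * e * r * (e * coef h \<beta>)"
      proof -
        have "e * r = e * r * e" using semi r by blast
        then have "coef f \<alpha> * (e * r) * coef h \<beta> = coef f \<alpha> * (e * r * e) * coef h \<beta>" by simp
        then show ?thesis by (simp add: mult.assoc)
      qed
      finally show "coef f \<alpha> * r * coef h \<beta> = 0" using IH1 IH2 r by simp
    qed
  qed
qed

end


context pbw begin

lemma rpqb_idem: assumes "right_pq_Baer R" "a \<in> R"
  shows "\<exists>e\<in>R. e * e = e \<and> (\<forall>r\<in>R. r * e = e * r * e) \<and> (\<forall>b\<in>R. (\<forall>r\<in>R. a * r * b = 0) \<longleftrightarrow> e * b = b)"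
proof -
  obtain e where e: "e \<in> R" "e * e = e" "r_ann R ((\<lambda>t. a * t) ` R) = (\<lambda>t. e * t) ` R"
    using assms unfolding right_pq_Baer_def by blast
  have mem: "z \<in> r_ann R ((\<lambda>t. a * t) ` R) \<longleftrightarrow> z \<in> R \<and> (\<forall>t\<in>R. a * t * z = 0)" for z
    unfolding r_ann_def by auto
  have eann: "\<forall>t\<in>R. a * t * e = 0"
  proof -
    have "e = e * 1" by simp
    then have "e \<in> (\<lambda>t. e * t) ` R" using R1 by blast
    then show ?thesis using e(3) mem by blast
  qed
  have semi: "\<forall>r\<in>R. r * e = e * r * e"
  proof
    fix r assume r: "r \<in> R"
    have "r * e \<in> r_ann R ((\<lambda>t. a * t) ` R)"
      unfolding mem using r e(1) Rmult eann by (auto simp: mult.assoc[symmetric]) (metis Rmult mult.assoc)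
    then obtain t' where "r * e = e * t'" using e(3) by auto
    then show "r * e = e * r * e" using e(2) by (metis mult.assoc)
  qed
  have ch: "(\<forall>r\<in>R. a * r * b = 0) \<longleftrightarrow> e * b = b" if b: "b \<in> R" for b
  proof
    assume "\<forall>r\<in>R. a * r * b = 0"
    then have "b \<in> r_ann R ((\<lambda>t. a * t) ` R)" unfolding mem using b by blast
    then obtain t' where "b = e * t'" using e(3) by auto
    then show "e * b = b" using e(2) by (metis mult.assoc)
  next
    assume eb: "e * b = b"
    show "\<forall>r\<in>R. a * r * b = 0"
    proof
      fix r assume "r \<in> R"
      then have "a * r * e = 0" using eann by blast
      then have "a * r * (e * b) = 0" by (metis mult.assoc mult_zero_left)
      then show "a * r * b = 0" using eb by simp
    qed
  qed
  show ?thesis using e(1,2) semi ch by blast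
qed

lemma lpqb_idem: assumes "left_pq_Baer R" "a \<in> R"
  shows "\<exists>e\<in>R. e * e = e \<and> (\<forall>r\<in>R. e * r = e * r * e) \<and> (\<forall>b\<in>R. (\<forall>r\<in>R. b * r * a = 0) \<longleftrightarrow> b * e = b)"
proof -
  obtain e where e: "e \<in> R" "e * e = e" "l_ann R ((\<lambda>t. t * a) ` R) = (\<lambda>t. t * e) ` R"
    using assms unfolding left_pq_Baer_def by blast
  have mem: "z \<in> l_ann R ((\<lambda>t. t * a) ` R) \<longleftrightarrow> z \<in> R \<and> (\<forall>t\<in>R. z * t * a = 0)" for z
    unfolding l_ann_def by (auto simp: mult.assoc)
  have eann: "\<forall>t\<in>R. e * t * a = 0"
  proof -
    have "e = 1 * e" by simp
    then have "e \<in> (\<lambda>t. t * e) ` R" using R1 by blast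
    then show ?thesis using e(3) mem by blast
  qed
  have semi: "\<forall>r\<in>R. e * r = e * r * e"
  proof
    fix r assume r: "r \<in> R"
    have "e * r \<in> l_ann R ((\<lambda>t. t * a) ` R)"
      unfolding mem using r e(1) Rmult eann by (auto simp: mult.assoc) (metis Rmult mult.assoc)
    then obtain t' where "e * r = t' * e" using e(3) by auto
    then show "e * r = e * r * e" using e(2) by (metis mult.assoc)
  qed
  have ch: "(\<forall>r\<in>R. b * r * a = 0) \<longleftrightarrow> b * e = b" if b: "b \<in> R" for b
  proof
    assume "\<forall>r\<in>R. b * r * a = 0"
    then have "b \<in> l_ann R ((\<lambda>t. t * a) ` R)" unfolding mem using b by blast
    then obtain t' where "b = t' * e" using e(3) by auto
    then show "b * e = b" using e(2) by (metis mult.assoc)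
  next
    assume eb: "b * e = b"
    show "\<forall>r\<in>R. b * r * a = 0"
    proof
      fix r assume "r \<in> R"
      then have "e * r * a = 0" using eann by blast
      then have "(b * e) * r * a = 0" by (metis mult.assoc mult_zero_right)
      then show "b * r * a = 0" using eb by simp
    qed
  qed
  show ?thesis using e(1,2) semi ch by blast
qed

lemma acR_right_idem: assumes "right_pq_Baer R" "finite E" "E \<subseteq> R"
  shows "\<exists>g\<in>R. g * g = g \<and> (\<forall>r\<in>R. r * g = g * r * g) \<and> (\<forall>b\<in>R. (\<forall>a\<in>E. \<forall>r\<in>R. a * r * b = 0) \<longleftrightarrow> g * b = b)"
  using assms(2,3)
proof (induction E rule: finite_induct)
  case empty
  have "1 \<in> R \<and> (1::'a) * 1 = 1 \<and> (\<forall>r\<in>R. r * 1 = 1 * r * 1) \<and> (\<forall>b\<in>R. (\<forall>a\<in>{}. \<forall>r\<in>R. a * r * b = 0) \<longleftrightarrow> 1 * b = b)"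
    using R1 by simp
  then show ?case by (intro bexI[of _ 1]) simp_all
next
  case (insert a E)
  have ER: "E \<subseteq> R" and aR: "a \<in> R" using insert.prems by auto
  obtain g where g: "g \<in> R" "g * g = g" "\<forall>r\<in>R. r * g = g * r * g"
    "\<forall>b\<in>R. (\<forall>a\<in>E. \<forall>r\<in>R. a * r * b = 0) \<longleftrightarrow> g * b = b" using insert.IH[OF ER] by blast
  obtain e where e: "e \<in> R" "e * e = e" "\<forall>r\<in>R. r * e = e * r * e"
    "\<forall>b\<in>R. (\<forall>r\<in>R. a * r * b = 0) \<longleftrightarrow> e * b = b"
    using rpqb_idem[OF assms(1) aR] by blast
  have eg: "e * g = g * e * g" using g(3) e(1) by blast
  have R': "e * g \<in> R" using Rmult e(1) g(1) by blast
  have idem: "(e * g) * (e * g) = e * g"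
  proof -
    have "(e * g) * (e * g) = e * (g * e * g)" by (simp add: mult.assoc)
    also have "\<dots> = e * (e * g)" using eg by simp
    also have "\<dots> = e * g" using e(2) by (simp add: mult.assoc[symmetric])
    finally show ?thesis .
  qed
  have semi: "\<forall>r\<in>R. r * (e * g) = (e * g) * r * (e * g)"
  proof
    fix r assume r: "r \<in> R"
    have "r * (e * g) = (r * e) * g" by (simp add: mult.assoc)
    also have "\<dots> = (e * r * e) * g" using e(3) r by simp
    also have "\<dots> = e * ((r * e) * g)" by (simp add: mult.assoc)
    also have "(r * e) * g = g * (r * e) * g" using g(3) Rmult[OF r e(1)] by blast
    finally show "r * (e * g) = (e * g) * r * (e * g)" by (simp add: mult.assoc)
  qed
  have ch: "(\<forall>a'\<in>insert a E. \<forall>r\<in>R. a' * r * b = 0) \<longleftrightarrow> (e * g) * b = b" if b: "b \<in> R" for b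
  proof
    assume "\<forall>a'\<in>insert a E. \<forall>r\<in>R. a' * r * b = 0"
    then have "e * b = b" "g * b = b" using e(4) g(4) b by auto
    then show "(e * g) * b = b" by (simp add: mult.assoc)
  next
    assume h: "(e * g) * b = b"
    have "e * b = b" using h e(2) by (metis mult.assoc)
    moreover have "g * b = b"
    proof -
      have "g * b = g * ((e * g) * b)" using h by simp
      also have "\<dots> = (g * e * g) * b" by (simp add: mult.assoc)
      also have "\<dots> = b" using eg h by simp
      finally show ?thesis .
    qed
    ultimately show "\<forall>a'\<in>insert a E. \<forall>r\<in>R. a' * r * b = 0" using e(4) g(4) b by auto
  qed
  show ?case using R' idem semi ch by blast
qed

lemma acR_right: assumes "right_pq_Baer R" "finite E" "E \<subseteq> R"
  shows "\<exists>c\<in>R. \<forall>b\<in>R. (\<forall>r\<in>R. c * r * b = 0) \<longleftrightarrow> (\<forall>a\<in>E. \<forall>r\<in>R. a * r * b = 0)"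
proof -
  obtain g where g: "g \<in> R" "g * g = g" "\<forall>r\<in>R. r * g = g * r * g"
    "\<forall>b\<in>R. (\<forall>a\<in>E. \<forall>r\<in>R. a * r * b = 0) \<longleftrightarrow> g * b = b"
    using acR_right_idem[OF assms] by blast
  have cR: "1 - g \<in> R" using Rdiff R1 g(1) by blast
  have "(\<forall>r\<in>R. (1 - g) * r * b = 0) \<longleftrightarrow> g * b = b" if "b \<in> R" for b
  proof
    assume "\<forall>r\<in>R. (1 - g) * r * b = 0"
    then have "(1 - g) * 1 * b = 0" using R1 by blast
    then show "g * b = b" by (simp add: algebra_simps)
  next
    assume gb: "g * b = b"
    show "\<forall>r\<in>R. (1 - g) * r * b = 0"
    proof
      fix r assume r: "r \<in> R"
      have "(1 - g) * r * b = (1 - g) * (r * g) * b" using gb by (simp add: mult.assoc)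
      also have "\<dots> = (1 - g) * (g * r * g) * b" using g(3) r by simp
      also have "\<dots> = ((1 - g) * g) * (r * g * b)" by (simp add: mult.assoc)
      also have "(1 - g) * g = 0" using g(2) by (simp add: algebra_simps)
      finally show "(1 - g) * r * b = 0" by simp
    qed
  qed
  then show ?thesis using cR g(4) by blast
qed

lemma acR_left_idem: assumes "left_pq_Baer R" "finite E" "E \<subseteq> R"
  shows "\<exists>g\<in>R. g * g = g \<and> (\<forall>r\<in>R. g * r = g * r * g) \<and> (\<forall>b\<in>R. (\<forall>a\<in>E. \<forall>r\<in>R. b * r * a = 0) \<longleftrightarrow> b * g = b)"
  using assms(2,3)
proof (induction E rule: finite_induct)
  case empty
  have "1 \<in> R \<and> (1::'a) * 1 = 1 \<and> (\<forall>r\<in>R. 1 * r = 1 * r * 1) \<and> (\<forall>b\<in>R. (\<forall>a\<in>{}. \<forall>r\<in>R. b * r * a = 0) \<longleftrightarrow> b * 1 = b)"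
    using R1 by simp
  then show ?case by (intro bexI[of _ 1]) simp_all
next
  case (insert a E)
  have ER: "E \<subseteq> R" and aR: "a \<in> R" using insert.prems by auto
  obtain g where g: "g \<in> R" "g * g = g" "\<forall>r\<in>R. g * r = g * r * g"
    "\<forall>b\<in>R. (\<forall>a\<in>E. \<forall>r\<in>R. b * r * a = 0) \<longleftrightarrow> b * g = b" using insert.IH[OF ER] by blast
  obtain e where e: "e \<in> R" "e * e = e" "\<forall>r\<in>R. e * r = e * r * e"
    "\<forall>b\<in>R. (\<forall>r\<in>R. b * r * a = 0) \<longleftrightarrow> b * e = b"
    using lpqb_idem[OF assms(1) aR] by blast
  have ge: "g * e = g * e * g" using g(3) e(1) by blast
  have R': "g * e \<in> R" using Rmult e(1) g(1) by blast
  have idem: "(g * e) * (g * e) = g * e"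
  proof -
    have "(g * e) * (g * e) = (g * e * g) * e" by (simp add: mult.assoc)
    also have "\<dots> = (g * e) * e" using ge by simp
    also have "\<dots> = g * e" using e(2) by (simp add: mult.assoc)
    finally show ?thesis .
  qed
  have semi: "\<forall>r\<in>R. (g * e) * r = (g * e) * r * (g * e)"
  proof
    fix r assume r: "r \<in> R"
    have A: "e * r = e * r * e" using e(3) r by blast
    have B: "g * (e * r) = g * (e * r) * g" using g(3) Rmult[OF e(1) r] by blast
    have "(g * e) * r = g * (e * r)" by (simp add: mult.assoc)
    also have "\<dots> = g * (e * r * e)" using A by (rule arg_cong)
    also have "\<dots> = (g * (e * r)) * e" by (simp only: mult.assoc)
    also have "\<dots> = (g * (e * r) * g) * e" using B by (rule arg_cong[where f="\<lambda>z. z * e"])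
    also have "\<dots> = (g * e) * r * (g * e)" by (simp only: mult.assoc)
    finally show "(g * e) * r = (g * e) * r * (g * e)" .
  qed
  have ch: "(\<forall>a'\<in>insert a E. \<forall>r\<in>R. b * r * a' = 0) \<longleftrightarrow> b * (g * e) = b" if b: "b \<in> R" for b
  proof
    assume "\<forall>a'\<in>insert a E. \<forall>r\<in>R. b * r * a' = 0"
    then have "b * e = b" "b * g = b" using e(4) g(4) b by auto
    then show "b * (g * e) = b" by (simp add: mult.assoc[symmetric])
  next
    assume h: "b * (g * e) = b"
    have "b * e = b" using h e(2) by (metis mult.assoc)
    moreover have "b * g = b"
    proof -
      have "b * g = (b * (g * e)) * g" using h by simp
      also have "\<dots> = b * (g * e * g)" by (simp add: mult.assoc)
      also have "\<dots> = b" using ge h by simp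
      finally show ?thesis .
    qed
    ultimately show "\<forall>a'\<in>insert a E. \<forall>r\<in>R. b * r * a' = 0" using e(4) g(4) b by auto
  qed
  show ?case using R' idem semi ch by blast
qed

lemma acR_left: assumes "left_pq_Baer R" "finite E" "E \<subseteq> R"
  shows "\<exists>c\<in>R. \<forall>b\<in>R. (\<forall>r\<in>R. b * r * c = 0) \<longleftrightarrow> (\<forall>a\<in>E. \<forall>r\<in>R. b * r * a = 0)"
proof -
  obtain g where g: "g \<in> R" "g * g = g" "\<forall>r\<in>R. g * r = g * r * g"
    "\<forall>b\<in>R. (\<forall>a\<in>E. \<forall>r\<in>R. b * r * a = 0) \<longleftrightarrow> b * g = b"
    using acR_left_idem[OF assms] by blast
  have cR: "1 - g \<in> R" using Rdiff R1 g(1) by blast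
  have "(\<forall>r\<in>R. b * r * (1 - g) = 0) \<longleftrightarrow> b * g = b" if "b \<in> R" for b
  proof
    assume "\<forall>r\<in>R. b * r * (1 - g) = 0"
    then have "b * 1 * (1 - g) = 0" using R1 by blast
    then show "b * g = b" by (simp add: algebra_simps)
  next
    assume gb: "b * g = b"
    show "\<forall>r\<in>R. b * r * (1 - g) = 0"
    proof
      fix r assume r: "r \<in> R"
      have "b * r * (1 - g) = (b * g) * r * (1 - g)" using gb by simp
      also have "\<dots> = b * (g * r) * (1 - g)" by (simp only: mult.assoc)
      also have "\<dots> = b * (g * r * g) * (1 - g)" using g(3) r by simp
      also have "\<dots> = (b * g * r) * (g * (1 - g))" by (simp add: mult.assoc)
      also have "g * (1 - g) = 0" using g(2) by (simp add: algebra_simps)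
      finally show "b * r * (1 - g) = 0" by simp
    qed
  qed
  then show ?thesis using cR g(4) by blast
qed

end


context pbw begin

lemma sum_pick: "(k::nat) < m \<Longrightarrow> (\<Sum>j<m. g j * (if j = k then t else 0)) = (g k * t :: 'a)"
proof -
  assume k: "k < m"
  have "(\<Sum>j<m. g j * (if j = k then t else 0)) = (\<Sum>j<m. if j = k then g j * t else 0)"
    by (rule sum.cong) auto
  also have "\<dots> = (if k = k then g k * t else 0)" by (rule sum_single) (use k in auto)
  also have "\<dots> = g k * t" by simp
  finally show ?thesis .
qed

lemma sum_pick2: "(k::nat) < m \<Longrightarrow> (\<Sum>j<m. (if j = k then t else 0) * g j) = (t * g k :: 'a)"
proof -
  assume k: "k < m"
  have "(\<Sum>j<m. (if j = k then t else 0) * g j) = (\<Sum>j<m. if j = k then t * g j else 0)"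
    by (rule sum.cong) auto
  also have "\<dots> = (if k = k then t * g k else 0)" by (rule sum_single) (use k in auto)
  also have "\<dots> = t * g k" by simp
  finally show ?thesis .
qed

lemma coefs_E: "(\<forall>k<(m::nat). \<forall>\<alpha>. P (coef (g k) \<alpha>)) \<longleftrightarrow> (\<forall>a\<in>(\<Union>k<m. coef (g k) ` supp (coef (g k))). P a)"
  if "P 0"
proof
  assume "\<forall>k<m. \<forall>\<alpha>. P (coef (g k) \<alpha>)" then show "\<forall>a\<in>(\<Union>k<m. coef (g k) ` supp (coef (g k))). P a" by auto
next
  assume H: "\<forall>a\<in>(\<Union>k<m. coef (g k) ` supp (coef (g k))). P a"
  show "\<forall>k<m. \<forall>\<alpha>. P (coef (g k) \<alpha>)"
  proof (intro allI impI)
    fix k \<alpha> assume k: "k < m"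
    show "P (coef (g k) \<alpha>)"
    proof (cases "coef (g k) \<alpha> = 0")
      case True then show ?thesis using that by simp
    next
      case False then have "\<alpha> \<in> supp (coef (g k))" unfolding supp_def by simp
      then show ?thesis using H k by blast
    qed
  qed
qed

lemma main_right: assumes baer: "right_pq_Baer R" shows "ac_right TYPE('a)"
  unfolding ac_right_def
proof (intro allI impI)
  fix I :: "'a set" assume "fg_right_ideal I"
  then obtain m :: nat and g where I: "I = {y. \<exists>t. y = (\<Sum>k<m. g k * t k)}" unfolding fg_right_ideal_def by blast
  define E where "E = (\<Union>k<m. coef (g k) ` supp (coef (g k)))"
  have finE: "finite E" using coef_fin unfolding E_def by auto
  have ER: "E \<subseteq> R" using coef_R unfolding E_def by auto
  obtain c where c: "c \<in> R" "\<forall>b\<in>R. (\<forall>r\<in>R. c * r * b = 0) \<longleftrightarrow> (\<forall>a\<in>E. \<forall>r\<in>R. a * r * b = 0)"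
    using acR_right[OF baer finE ER] by blast
  have key: "(\<forall>y\<in>I. y * h = 0) \<longleftrightarrow> (\<forall>t. c * t * h = 0)" for h
  proof -
    have s1: "(\<forall>y\<in>I. y * h = 0) \<longleftrightarrow> (\<forall>k<m. \<forall>t. g k * t * h = 0)"
    proof
      assume H: "\<forall>y\<in>I. y * h = 0"
      show "\<forall>k<m. \<forall>t. g k * t * h = 0"
      proof (intro allI impI)
        fix k t assume k: "k < m"
        have "g k * t \<in> I" unfolding I mem_Collect_eq
          by (rule exI[of _ "\<lambda>j. if j = k then t else 0"]) (rule sum_pick[OF k, symmetric])
        then show "g k * t * h = 0" using H by blast
      qed
    next
      assume H: "\<forall>k<m. \<forall>t. g k * t * h = 0"
      show "\<forall>y\<in>I. y * h = 0"
      proof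
        fix y assume "y \<in> I"
        then obtain t where t: "y = (\<Sum>k<m. g k * t k)" unfolding I by blast
        have "y * h = (\<Sum>k<m. g k * t k * h)" unfolding t by (simp add: sum_distrib_right)
        also have "\<dots> = 0" using H by simp
        finally show "y * h = 0" .
      qed
    qed
    have s2: "(\<forall>k<m. \<forall>t. g k * t * h = 0) \<longleftrightarrow> (\<forall>k<m. \<forall>\<alpha>. \<forall>\<beta>. \<forall>r\<in>R. coef (g k) \<alpha> * r * coef h \<beta> = 0)"
    proof (intro iffI allI impI)
      fix k \<alpha> \<beta> assume "\<forall>k<m. \<forall>t. g k * t * h = 0" "k < m"
      then have "\<forall>t. g k * t * h = 0" by blast
      then show "\<forall>r\<in>R. coef (g k) \<alpha> * r * coef h \<beta> = 0" using arm_right[OF baer] by blast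
    next
      fix k t assume "\<forall>k<m. \<forall>\<alpha> \<beta>. \<forall>r\<in>R. coef (g k) \<alpha> * r * coef h \<beta> = 0" "k < m"
      then have "\<forall>\<alpha> \<beta>. \<forall>r\<in>R. coef (g k) \<alpha> * r * coef h \<beta> = 0" by blast
      then show "g k * t * h = 0" by (rule arm_easy)
    qed
    have s3: "(\<forall>k<m. \<forall>\<alpha>. \<forall>\<beta>. \<forall>r\<in>R. coef (g k) \<alpha> * r * coef h \<beta> = 0) \<longleftrightarrow>
        (\<forall>a\<in>E. \<forall>\<beta>. \<forall>r\<in>R. a * r * coef h \<beta> = 0)"
      unfolding E_def by (rule coefs_E) simp
    have s4: "(\<forall>a\<in>E. \<forall>\<beta>. \<forall>r\<in>R. a * r * coef h \<beta> = 0) \<longleftrightarrow> (\<forall>\<beta>. \<forall>r\<in>R. c * r * coef h \<beta> = 0)"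
      using c(2) coef_R by blast
    have s5: "(\<forall>\<beta>. \<forall>r\<in>R. c * r * coef h \<beta> = 0) \<longleftrightarrow> (\<forall>\<alpha> \<beta>. \<forall>r\<in>R. coef c \<alpha> * r * coef h \<beta> = 0)"
      using R_is_const[OF c(1)] by auto
    have s6: "(\<forall>\<alpha> \<beta>. \<forall>r\<in>R. coef c \<alpha> * r * coef h \<beta> = 0) \<longleftrightarrow> (\<forall>t. c * t * h = 0)"
    proof
      assume "\<forall>\<alpha> \<beta>. \<forall>r\<in>R. coef c \<alpha> * r * coef h \<beta> = 0"
      then show "\<forall>t. c * t * h = 0" using arm_easy by blast
    next
      assume "\<forall>t. c * t * h = 0"
      then show "\<forall>\<alpha> \<beta>. \<forall>r\<in>R. coef c \<alpha> * r * coef h \<beta> = 0" by (rule arm_right[OF baer])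
    qed
    show ?thesis using s1 s2 s3 s4 s5 s6 by (simp only:)
  qed
  show "\<exists>c. r_ann UNIV I = r_ann UNIV (range (\<lambda>t. c * t))"
  proof (intro exI set_eqI)
    fix h
    have "h \<in> r_ann UNIV I \<longleftrightarrow> (\<forall>y\<in>I. y * h = 0)" unfolding r_ann_def by simp
    moreover have "h \<in> r_ann UNIV (range (\<lambda>t. c * t)) \<longleftrightarrow> (\<forall>t. c * t * h = 0)" unfolding r_ann_def by simp
    ultimately show "h \<in> r_ann UNIV I \<longleftrightarrow> h \<in> r_ann UNIV (range (\<lambda>t. c * t))" using key by simp
  qed
qed

lemma main_left: assumes baer: "left_pq_Baer R" shows "ac_left TYPE('a)"
  unfolding ac_left_def
proof (intro allI impI)
  fix I :: "'a set" assume "fg_left_ideal I"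
  then obtain m :: nat and g where I: "I = {y. \<exists>t. y = (\<Sum>k<m. t k * g k)}" unfolding fg_left_ideal_def by blast
  define E where "E = (\<Union>k<m. coef (g k) ` supp (coef (g k)))"
  have finE: "finite E" using coef_fin unfolding E_def by auto
  have ER: "E \<subseteq> R" using coef_R unfolding E_def by auto
  obtain c where c: "c \<in> R" "\<forall>b\<in>R. (\<forall>r\<in>R. b * r * c = 0) \<longleftrightarrow> (\<forall>a\<in>E. \<forall>r\<in>R. b * r * a = 0)"
    using acR_left[OF baer finE ER] by blast
  have key: "(\<forall>y\<in>I. h * y = 0) \<longleftrightarrow> (\<forall>t. h * t * c = 0)" for h
  proof -
    have s1: "(\<forall>y\<in>I. h * y = 0) \<longleftrightarrow> (\<forall>k<m. \<forall>t. h * t * g k = 0)"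
    proof
      assume H: "\<forall>y\<in>I. h * y = 0"
      show "\<forall>k<m. \<forall>t. h * t * g k = 0"
      proof (intro allI impI)
        fix k t assume k: "k < m"
        have "t * g k \<in> I" unfolding I mem_Collect_eq
          by (rule exI[of _ "\<lambda>j. if j = k then t else 0"]) (rule sum_pick2[OF k, symmetric])
        then show "h * t * g k = 0" using H by (simp add: mult.assoc)
      qed
    next
      assume H: "\<forall>k<m. \<forall>t. h * t * g k = 0"
      show "\<forall>y\<in>I. h * y = 0"
      proof
        fix y assume "y \<in> I"
        then obtain t where t: "y = (\<Sum>k<m. t k * g k)" unfolding I by blast
        have "h * y = (\<Sum>k<m. h * t k * g k)" unfolding t by (simp add: sum_distrib_left mult.assoc)
        also have "\<dots> = 0" using H by simp
        finally show "h * y = 0" .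
      qed
    qed
    have s2: "(\<forall>k<m. \<forall>t. h * t * g k = 0) \<longleftrightarrow> (\<forall>k<m. \<forall>\<alpha>. \<forall>\<beta>. \<forall>r\<in>R. coef h \<beta> * r * coef (g k) \<alpha> = 0)"
    proof (intro iffI allI impI)
      fix k \<alpha> \<beta> assume "\<forall>k<m. \<forall>t. h * t * g k = 0" "k < m"
      then have "\<forall>t. h * t * g k = 0" by blast
      then show "\<forall>r\<in>R. coef h \<beta> * r * coef (g k) \<alpha> = 0" using arm_left[OF baer] by blast
    next
      fix k t assume "\<forall>k<m. \<forall>\<alpha> \<beta>. \<forall>r\<in>R. coef h \<beta> * r * coef (g k) \<alpha> = 0" "k < m"
      then have "\<forall>\<beta> \<alpha>. \<forall>r\<in>R. coef h \<beta> * r * coef (g k) \<alpha> = 0" by blast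
      then show "h * t * g k = 0" by (rule arm_easy)
    qed
    have s3: "(\<forall>k<m. \<forall>\<alpha>. \<forall>\<beta>. \<forall>r\<in>R. coef h \<beta> * r * coef (g k) \<alpha> = 0) \<longleftrightarrow>
        (\<forall>a\<in>E. \<forall>\<beta>. \<forall>r\<in>R. coef h \<beta> * r * a = 0)"
      unfolding E_def by (rule coefs_E) simp
    have s4: "(\<forall>a\<in>E. \<forall>\<beta>. \<forall>r\<in>R. coef h \<beta> * r * a = 0) \<longleftrightarrow> (\<forall>\<beta>. \<forall>r\<in>R. coef h \<beta> * r * c = 0)"
      using c(2) coef_R by blast
    have s5: "(\<forall>\<beta>. \<forall>r\<in>R. coef h \<beta> * r * c = 0) \<longleftrightarrow> (\<forall>\<beta> \<alpha>. \<forall>r\<in>R. coef h \<beta> * r * coef c \<alpha> = 0)"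
      using R_is_const[OF c(1)] by auto
    have s6: "(\<forall>\<beta> \<alpha>. \<forall>r\<in>R. coef h \<beta> * r * coef c \<alpha> = 0) \<longleftrightarrow> (\<forall>t. h * t * c = 0)"
    proof
      assume "\<forall>\<beta> \<alpha>. \<forall>r\<in>R. coef h \<beta> * r * coef c \<alpha> = 0"
      then show "\<forall>t. h * t * c = 0" using arm_easy by blast
    next
      assume "\<forall>t. h * t * c = 0"
      then show "\<forall>\<beta> \<alpha>. \<forall>r\<in>R. coef h \<beta> * r * coef c \<alpha> = 0" by (rule arm_left[OF baer])
    qed
    show ?thesis using s1 s2 s3 s4 s5 s6 by (simp only:)
  qed
  show "\<exists>c. l_ann UNIV I = l_ann UNIV (range (\<lambda>t. t * c))"
  proof (intro exI set_eqI)
    fix h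
    have "h \<in> l_ann UNIV I \<longleftrightarrow> (\<forall>y\<in>I. h * y = 0)" unfolding l_ann_def by simp
    moreover have "h \<in> l_ann UNIV (range (\<lambda>t. t * c)) \<longleftrightarrow> (\<forall>t. h * t * c = 0)"
      unfolding l_ann_def by (simp add: mult.assoc)
    ultimately show "h \<in> l_ann UNIV I \<longleftrightarrow> h \<in> l_ann UNIV (range (\<lambda>t. t * c))" using key by simp
  qed
qed

end

theorem mainTheorem4:
  fixes R :: "'a::ring_1 set" and x :: "nat \<Rightarrow> 'a" and n :: nat
    and \<sigma> \<delta> :: "nat \<Rightarrow> 'a \<Rightarrow> 'a"
  assumes "bijective_skew_PBW R x n \<sigma>"
    and "assoc_families R x n \<sigma> \<delta>"
    and "Sigma_compatible R n \<sigma>"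
    and "Delta_compatible R n \<delta>"
  shows "(right_pq_Baer R \<longrightarrow> ac_right TYPE('a)) \<and>
         (left_pq_Baer R \<longrightarrow> ac_left TYPE('a))"
proof -
  interpret pbw R x n \<sigma> \<delta> using assms by (unfold_locales)
  show ?thesis using main_right main_left by blast
qed



end
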